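(* Let $M\in\mathrm{rep}\,G_{m,n}$ be interval-decomposable and $I\in\mathbb{I}_{m,n}$. Then for each $\ast\in\{ss,cc,tot\}$, $$\bar d^\ast_M(I)=\sum_{J\in U(I)} d_M(V_J).$$
   Context: Fix a field $K$. For integers $m,n\ge1$, $G_{m,n}$ is the equioriented commutative $m\times n$ grid: the quiver with vertex set $\{(i,j):1\le i\le m,\ 1\le j\le n\}$ and arrows $(i,j)\to(i,j+1)$ and $(i,j)\to(i+1,j)$, bound by all commutativity relations; $\mathrm{rep}\,G_{m,n}$ is its category of finite-dimensional representations over $K$ satisfying the relations. For an indecomposable $L$, $d_M(L)$ is the multiplicity of $L$ in a Krull–Schmidt decomposition of $M$. An interval of $G_{m,n}$ is a nonempty full subquiver $I$ which is connected (as an undirected graph) and convex (whenever $x,y\in I_0$ and there are paths $x\to z$, $z\to y$ in $G_{m,n}$, then $z\in I_0$); $\mathbb{I}_{m,n}$ is the set of intervals ordered by inclusion of vertex sets, and $U(I)=\{J\in\mathbb{I}_{m,n}:I\le J\}$. The interval representation $V_I$ has $K$ at vertices of $I$, $0$ elsewhere, identity maps on arrows inside $I$ and zero maps otherwise; $M$ is interval-decomposable if it is isomorphic to a direct sum of interval representations. Essential vertices: $I^{ss}_0$ is the set of sources and sinks of the quiver $I$; $I^{cc}_0=I_0\cap(\mathrm{pr}_1(I^{ss}_0)\times\mathrm{pr}_2(I^{ss}_0))$ with $\mathrm{pr}_1,\mathrm{pr}_2$ coordinate projections; $I^{tot}_0=I_0$. Let $KG_{m,n}$ be the $K$-linear category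 whose objects are the vertices and whose morphisms are $K$-linear combinations of paths modulo the commutativity relations; representations are $K$-linear functors $KG_{m,n}\to\mathrm{vect}_K$. For $\ast\in\{ss,cc,tot\}$, $\mathcal{C}^\ast_I$ is the full subcategory of $KG_{m,n}$ on $I^\ast_0$, and $M^\ast_I:=M|_{\mathcal{C}^\ast_I}$. The compressed multiplicity $\bar d^\ast_M(I)$ is the multiplicity of the indecomposable $(V_I)^\ast_I$ as a direct summand of $M^\ast_I$. *)

theory Defs
  imports "Jordan_Normal_Form.Matrix"
begin

type_synonym vtx = "nat \<times> nat"

definition grid :: "nat \<Rightarrow> nat \<Rightarrow> vtx set" where
  "grid m n = {1..m} \<times> {1..n}"

definition arrow :: "nat \<Rightarrow> nat \<Rightarrow> vtx \<Rightarrow> vtx \<Rightarrow> bool" where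
  "arrow m n x y \<longleftrightarrow> x \<in> grid m n \<and> y \<in> grid m n \<and>
     ((fst y = fst x \<and> snd y = snd x + 1) \<or> (fst y = fst x + 1 \<and> snd y = snd x))"

definition leq :: "nat \<Rightarrow> nat \<Rightarrow> vtx \<Rightarrow> vtx \<Rightarrow> bool" where
  "leq m n x y \<longleftrightarrow> x \<in> grid m n \<and> y \<in> grid m n \<and> (arrow m n)\<^sup>*\<^sup>* x y"

text \<open>Since all commutativity relations hold, the morphism space of K G_{m,n} from x to y
  is K (spanned by the unique path class) when there is a path x -> y, and 0 otherwise.
  A K-linear functor on the full subcategory on S is therefore given by a vector space
  K^(rdim x) at each x in S and a matrix rmap x y for each pair x, y in S with a path
  x -> y, subject to functoriality.\<close>

record 'a rep =
  rdim :: "vtx \<Rightarrow> nat"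
  rmap :: "vtx \<Rightarrow> vtx \<Rightarrow> 'a mat"

definition is_rep :: "nat \<Rightarrow> nat \<Rightarrow> vtx set \<Rightarrow> 'a::field rep \<Rightarrow> bool" where
  "is_rep m n S M \<longleftrightarrow> S \<subseteq> grid m n \<and>
     (\<forall>x\<in>S. \<forall>y\<in>S. leq m n x y \<longrightarrow> rmap M x y \<in> carrier_mat (rdim M y) (rdim M x)) \<and>
     (\<forall>x\<in>S. rmap M x x = 1\<^sub>m (rdim M x)) \<and>
     (\<forall>x\<in>S. \<forall>y\<in>S. \<forall>z\<in>S. leq m n x y \<longrightarrow> leq m n y z \<longrightarrow>
        rmap M y z * rmap M x y = rmap M x z)"

definition iso_rep :: "nat \<Rightarrow> nat \<Rightarrow> vtx set \<Rightarrow> 'a::field rep \<Rightarrow> 'a rep \<Rightarrow> bool" where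
  "iso_rep m n S M N \<longleftrightarrow> (\<exists>f :: vtx \<Rightarrow> 'a mat.
     (\<forall>x\<in>S. f x \<in> carrier_mat (rdim N x) (rdim M x) \<and> invertible_mat (f x)) \<and>
     (\<forall>x\<in>S. \<forall>y\<in>S. leq m n x y \<longrightarrow> f y * rmap M x y = rmap N x y * f x))"

definition dsum :: "'a::field rep list \<Rightarrow> 'a rep" where
  "dsum Ls = \<lparr> rdim = (\<lambda>x. sum_list (map (\<lambda>L. rdim L x) Ls)),
              rmap = (\<lambda>x y. diag_block_mat (map (\<lambda>L. rmap L x y) Ls)) \<rparr>"

definition nonzero_rep :: "vtx set \<Rightarrow> 'a rep \<Rightarrow> bool" where
  "nonzero_rep S M \<longleftrightarrow> (\<exists>x\<in>S. rdim M x > 0)"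

definition indecomposable :: "nat \<Rightarrow> nat \<Rightarrow> vtx set \<Rightarrow> 'a::field rep \<Rightarrow> bool" where
  "indecomposable m n S L \<longleftrightarrow> is_rep m n S L \<and> nonzero_rep S L \<and>
     \<not> (\<exists>A B. is_rep m n S A \<and> is_rep m n S B \<and> nonzero_rep S A \<and> nonzero_rep S B \<and>
            iso_rep m n S L (dsum [A, B]))"

definition KS_decomp :: "nat \<Rightarrow> nat \<Rightarrow> vtx set \<Rightarrow> 'a::field rep \<Rightarrow> 'a rep list \<Rightarrow> bool" where
  "KS_decomp m n S M Ls \<longleftrightarrow> (\<forall>L\<in>set Ls. indecomposable m n S L) \<and> iso_rep m n S M (dsum Ls)"

text \<open>Multiplicity of L in a Krull--Schmidt decomposition of M (well defined by Krull--Schmidt).\<close>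
definition mult :: "nat \<Rightarrow> nat \<Rightarrow> vtx set \<Rightarrow> 'a::field rep \<Rightarrow> 'a rep \<Rightarrow> nat" where
  "mult m n S M L = (SOME d. \<exists>Ls. KS_decomp m n S M Ls \<and>
        length (filter (\<lambda>N. iso_rep m n S N L) Ls) = d)"

definition connected_set :: "nat \<Rightarrow> nat \<Rightarrow> vtx set \<Rightarrow> bool" where
  "connected_set m n I \<longleftrightarrow> (\<forall>x\<in>I. \<forall>y\<in>I.
     (\<lambda>a b. a \<in> I \<and> b \<in> I \<and> (arrow m n a b \<or> arrow m n b a))\<^sup>*\<^sup>* x y)"

definition convex_set :: "nat \<Rightarrow> nat \<Rightarrow> vtx set \<Rightarrow> bool" where
  "convex_set m n I \<longleftrightarrow> (\<forall>x\<in>I. \<forall>y\<in>I. \<forall>z. leq m n x z \<and> leq m n z y \<longrightarrow> z \<in> I)"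

definition is_interval :: "nat \<Rightarrow> nat \<Rightarrow> vtx set \<Rightarrow> bool" where
  "is_interval m n I \<longleftrightarrow> I \<noteq> {} \<and> I \<subseteq> grid m n \<and> connected_set m n I \<and> convex_set m n I"

definition intv_rep :: "vtx set \<Rightarrow> 'a::field rep" where
  "intv_rep I = \<lparr> rdim = (\<lambda>x. if x \<in> I then 1 else 0),
     rmap = (\<lambda>x y. if x \<in> I \<and> y \<in> I then 1\<^sub>m 1
                   else 0\<^sub>m (if y \<in> I then 1 else 0) (if x \<in> I then 1 else 0)) \<rparr>"

definition interval_decomposable :: "nat \<Rightarrow> nat \<Rightarrow> 'a::field rep \<Rightarrow> bool" where
  "interval_decomposable m n M \<longleftrightarrow>
     (\<exists>Js. (\<forall>J\<in>set Js. is_interval m n J) \<and> iso_rep m n (grid m n) M (dsum (map intv_rep Js)))"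

definition sources_sinks :: "nat \<Rightarrow> nat \<Rightarrow> vtx set \<Rightarrow> vtx set" where
  "sources_sinks m n I = {x \<in> I. (\<not> (\<exists>a\<in>I. arrow m n a x)) \<or> (\<not> (\<exists>b\<in>I. arrow m n x b))}"

datatype compression = SS | CC | TOT

definition ess :: "nat \<Rightarrow> nat \<Rightarrow> compression \<Rightarrow> vtx set \<Rightarrow> vtx set" where
  "ess m n c I = (case c of
       SS \<Rightarrow> sources_sinks m n I
     | CC \<Rightarrow> I \<inter> (fst ` sources_sinks m n I \<times> snd ` sources_sinks m n I)
     | TOT \<Rightarrow> I)"

text \<open>M restricted to the full subcategory on ess c I is M viewed as a rep on that vertex set.\<close>
definition compressed_mult :: "nat \<Rightarrow> nat \<Rightarrow> compression \<Rightarrow> 'a::field rep \<Rightarrow> vtx set \<Rightarrow> nat" where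
  "compressed_mult m n c M I = mult m n (ess m n c I) M (intv_rep I)"

end

theory Submission
  imports Defs "Jordan_Normal_Form.Determinant"
begin



lemma fb_zero_corner:
  assumes "A \<in> carrier_mat a b"
  shows "four_block_mat A (0\<^sub>m a 0) (0\<^sub>m 0 b) (0\<^sub>m 0 0) = A"
  using assms by (intro eq_matI) auto

lemma fb_inj:
  assumes eq: "four_block_mat A1 B1 C1 D1 = four_block_mat A2 B2 C2 D2"
   and c: "A1 \<in> carrier_mat a b" "A2 \<in> carrier_mat a b" "D1 \<in> carrier_mat c d" "D2 \<in> carrier_mat c d"
   "B1 \<in> carrier_mat a d" "B2 \<in> carrier_mat a d" "C1 \<in> carrier_mat c b" "C2 \<in> carrier_mat c b"
  shows "A1 = A2 \<and> B1 = B2 \<and> C1 = C2 \<and> D1 = D2"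
proof (intro conjI)
  have e: "\<And>i j. four_block_mat A1 B1 C1 D1 $$ (i,j) = four_block_mat A2 B2 C2 D2 $$ (i,j)"
    using eq by simp
  show "A1 = A2"
  proof (rule eq_matI)
    fix i j assume "i < dim_row A2" "j < dim_col A2"
    thus "A1 $$ (i,j) = A2 $$ (i,j)" using e[of i j] c by auto
  qed (use c in auto)
  show "B1 = B2"
  proof (rule eq_matI)
    fix i j assume "i < dim_row B2" "j < dim_col B2"
    thus "B1 $$ (i,j) = B2 $$ (i,j)" using e[of i "j+b"] c by auto
  qed (use c in auto)
  show "C1 = C2"
  proof (rule eq_matI)
    fix i j assume "i < dim_row C2" "j < dim_col C2"
    thus "C1 $$ (i,j) = C2 $$ (i,j)" using e[of "i+a" j] c by auto
  qed (use c in auto)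
  show "D1 = D2"
  proof (rule eq_matI)
    fix i j assume "i < dim_row D2" "j < dim_col D2"
    thus "D1 $$ (i,j) = D2 $$ (i,j)" using e[of "i+a" "j+b"] c by auto
  qed (use c in auto)
qed

definition inl :: "nat \<Rightarrow> nat \<Rightarrow> 'a::field mat" where
  "inl a b = mat (a+b) a (\<lambda>(i,j). if i = j then 1 else 0)"
definition inr :: "nat \<Rightarrow> nat \<Rightarrow> 'a::field mat" where
  "inr a b = mat (a+b) b (\<lambda>(i,j). if i = a + j then 1 else 0)"
definition prl :: "nat \<Rightarrow> nat \<Rightarrow> 'a::field mat" where
  "prl a b = mat a (a+b) (\<lambda>(i,j). if i = j then 1 else 0)"
definition prr :: "nat \<Rightarrow> nat \<Rightarrow> 'a::field mat" where
  "prr a b = mat b (a+b) (\<lambda>(i,j). if j = a + i then 1 else 0)"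

lemma inl_carrier[simp]: "inl a b \<in> carrier_mat (a+b) a" by (simp add: inl_def)
lemma inr_carrier[simp]: "inr a b \<in> carrier_mat (a+b) b" by (simp add: inr_def)
lemma prl_carrier[simp]: "prl a b \<in> carrier_mat a (a+b)" by (simp add: prl_def)
lemma prr_carrier[simp]: "prr a b \<in> carrier_mat b (a+b)" by (simp add: prr_def)

lemma dims_blk[simp]: "dim_row (inl a b) = a+b" "dim_col (inl a b) = a"
  "dim_row (inr a b) = a+b" "dim_col (inr a b) = b"
  "dim_row (prl a b) = a" "dim_col (prl a b) = a+b"
  "dim_row (prr a b) = b" "dim_col (prr a b) = a+b"
  by (auto simp: inl_def inr_def prl_def prr_def)

lemma col_inl: "j < a \<Longrightarrow> col (inl a b) j = unit_vec (a+b) j"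
  by (intro eq_vecI) (auto simp: inl_def unit_vec_def)
lemma col_inr: "j < b \<Longrightarrow> col (inr a b) j = unit_vec (a+b) (a+j)"
  by (intro eq_vecI) (auto simp: inr_def unit_vec_def)
lemma row_prl: "i < a \<Longrightarrow> row (prl a b) i = unit_vec (a+b) i"
  by (intro eq_vecI) (auto simp: prl_def unit_vec_def)
lemma row_prr: "i < b \<Longrightarrow> row (prr a b) i = unit_vec (a+b) (a+i)"
  by (intro eq_vecI) (auto simp: prr_def unit_vec_def)

lemma mult_inl_index: "X \<in> carrier_mat r (a+b) \<Longrightarrow> i < r \<Longrightarrow> j < a \<Longrightarrow> (X * inl a b) $$ (i,j) = X $$ (i,j)"
  by (auto simp: col_inl)
lemma mult_inr_index: "X \<in> carrier_mat r (a+b) \<Longrightarrow> i < r \<Longrightarrow> j < b \<Longrightarrow> (X * inr a b) $$ (i,j) = X $$ (i,a+j)"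
  by (auto simp: col_inr)
lemma prl_mult_index: "X \<in> carrier_mat (a+b) c \<Longrightarrow> i < a \<Longrightarrow> j < c \<Longrightarrow> (prl a b * X) $$ (i,j) = X $$ (i,j)"
  by (auto simp: row_prl)
lemma prr_mult_index: "X \<in> carrier_mat (a+b) c \<Longrightarrow> i < b \<Longrightarrow> j < c \<Longrightarrow> (prr a b * X) $$ (i,j) = X $$ (a+i,j)"
  by (auto simp: row_prr)

lemma prl_inl: "prl a b * inl a b = (1\<^sub>m a :: 'a::field mat)"
proof (rule eq_matI)
  fix i j assume "i < dim_row (1\<^sub>m a :: 'a mat)" "j < dim_col (1\<^sub>m a :: 'a mat)"
  hence "(prl a b * inl a b) $$ (i,j) = (inl a b :: 'a mat) $$ (i,j)" by (intro prl_mult_index) auto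
  thus "(prl a b * inl a b) $$ (i,j) = (1\<^sub>m a :: 'a mat) $$ (i,j)" using \<open>i < _\<close> \<open>j < _\<close> by (simp add: inl_def)
qed auto
lemma prr_inr: "prr a b * inr a b = (1\<^sub>m b :: 'a::field mat)"
proof (rule eq_matI)
  fix i j assume "i < dim_row (1\<^sub>m b :: 'a mat)" "j < dim_col (1\<^sub>m b :: 'a mat)"
  hence "(prr a b * inr a b) $$ (i,j) = (inr a b :: 'a mat) $$ (a+i,j)" by (intro prr_mult_index) auto
  thus "(prr a b * inr a b) $$ (i,j) = (1\<^sub>m b :: 'a mat) $$ (i,j)" using \<open>i < _\<close> \<open>j < _\<close> by (simp add: inr_def)
qed auto
lemma prl_inr: "prl a b * inr a b = (0\<^sub>m a b :: 'a::field mat)"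
proof (rule eq_matI)
  fix i j assume "i < dim_row (0\<^sub>m a b :: 'a mat)" "j < dim_col (0\<^sub>m a b :: 'a mat)"
  hence "(prl a b * inr a b) $$ (i,j) = (inr a b :: 'a mat) $$ (i,j)" by (intro prl_mult_index) auto
  thus "(prl a b * inr a b) $$ (i,j) = (0\<^sub>m a b :: 'a mat) $$ (i,j)" using \<open>i < _\<close> \<open>j < _\<close> by (simp add: inr_def)
qed auto
lemma prr_inl: "prr a b * inl a b = (0\<^sub>m b a :: 'a::field mat)"
proof (rule eq_matI)
  fix i j assume "i < dim_row (0\<^sub>m b a :: 'a mat)" "j < dim_col (0\<^sub>m b a :: 'a mat)"
  hence "(prr a b * inl a b) $$ (i,j) = (inl a b :: 'a mat) $$ (a+i,j)" by (intro prr_mult_index) auto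
  thus "(prr a b * inl a b) $$ (i,j) = (0\<^sub>m b a :: 'a mat) $$ (i,j)" using \<open>i < _\<close> \<open>j < _\<close> by (simp add: inl_def)
qed auto

lemma row_inl: "i < a + b \<Longrightarrow> row (inl a b) i = (if i < a then unit_vec a i else 0\<^sub>v a)"
  by (intro eq_vecI) (auto simp: inl_def unit_vec_def)
lemma row_inr: "i < a + b \<Longrightarrow> row (inr a b) i = (if a \<le> i then unit_vec b (i - a) else 0\<^sub>v b)"
  by (intro eq_vecI) (auto simp: inr_def unit_vec_def)
lemma col_prl: "j < a + b \<Longrightarrow> col (prl a b) j = (if j < a then unit_vec a j else 0\<^sub>v a)"
  by (intro eq_vecI) (auto simp: prl_def unit_vec_def)
lemma col_prr: "j < a + b \<Longrightarrow> col (prr a b) j = (if a \<le> j then unit_vec b (j - a) else 0\<^sub>v b)"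
  by (intro eq_vecI) (auto simp: prr_def unit_vec_def)

lemma inl_mult_index: "X \<in> carrier_mat a c \<Longrightarrow> i < a + b \<Longrightarrow> j < c \<Longrightarrow>
   (inl a b * X) $$ (i,j) = (if i < a then X $$ (i,j) else 0)"
  by (auto simp: row_inl)
lemma inr_mult_index: "X \<in> carrier_mat b c \<Longrightarrow> i < a + b \<Longrightarrow> j < c \<Longrightarrow>
   (inr a b * X) $$ (i,j) = (if a \<le> i then X $$ (i - a,j) else 0)"
  by (auto simp: row_inr)
lemma mult_prl_index: "X \<in> carrier_mat r a \<Longrightarrow> i < r \<Longrightarrow> j < a + b \<Longrightarrow>
   (X * prl a b) $$ (i,j) = (if j < a then X $$ (i,j) else 0)"
  by (auto simp: col_prl)
lemma mult_prr_index: "X \<in> carrier_mat r b \<Longrightarrow> i < r \<Longrightarrow> j < a + b \<Longrightarrow>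
   (X * prr a b) $$ (i,j) = (if a \<le> j then X $$ (i,j - a) else 0)"
  by (auto simp: col_prr)

lemma inl_prl_inr_prr: "inl a b * prl a b + inr a b * prr a b = (1\<^sub>m (a+b) :: 'a::field mat)"
proof (rule eq_matI)
  fix i j assume ij: "i < dim_row (1\<^sub>m (a+b) :: 'a mat)" "j < dim_col (1\<^sub>m (a+b) :: 'a mat)"
  have 1: "(inl a b * prl a b) $$ (i,j) = (if i < a then (prl a b :: 'a mat) $$ (i,j) else 0)"
    using ij by (intro inl_mult_index) auto
  have 2: "(inr a b * prr a b) $$ (i,j) = (if a \<le> i then (prr a b :: 'a mat) $$ (i - a,j) else 0)"
    using ij by (intro inr_mult_index) auto
  show "(inl a b * prl a b + inr a b * prr a b) $$ (i,j) = (1\<^sub>m (a+b) :: 'a mat) $$ (i,j)"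
    using ij 1 2 by (auto simp: prl_def prr_def)
qed auto




lemma leq_refl: "x \<in> grid m n \<Longrightarrow> leq m n x x"
  by (simp add: leq_def)

lemma leq_trans: "leq m n x y \<Longrightarrow> leq m n y z \<Longrightarrow> leq m n x z"
  unfolding leq_def by auto

lemma arrow_leq: "arrow m n x y \<Longrightarrow> leq m n x y"
  unfolding leq_def by (auto simp: arrow_def)

section \<open>Representations and homomorphisms\<close>

lemma rep_carrier: "is_rep m n S X \<Longrightarrow> x \<in> S \<Longrightarrow> y \<in> S \<Longrightarrow> leq m n x y \<Longrightarrow>
  rmap X x y \<in> carrier_mat (rdim X y) (rdim X x)"
  unfolding is_rep_def by auto

lemma rep_id: "is_rep m n S X \<Longrightarrow> x \<in> S \<Longrightarrow> rmap X x x = 1\<^sub>m (rdim X x)"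
  unfolding is_rep_def by auto

lemma rep_comp: "is_rep m n S X \<Longrightarrow> x \<in> S \<Longrightarrow> y \<in> S \<Longrightarrow> z \<in> S \<Longrightarrow> leq m n x y \<Longrightarrow> leq m n y z \<Longrightarrow>
  rmap X y z * rmap X x y = rmap X x z"
  unfolding is_rep_def by auto

lemma is_rep_mono: "is_rep m n S X \<Longrightarrow> S' \<subseteq> S \<Longrightarrow> is_rep m n S' X"
  unfolding is_rep_def by blast

lemma iso_mono: "iso_rep m n S X Y \<Longrightarrow> S' \<subseteq> S \<Longrightarrow> iso_rep m n S' X Y"
  unfolding iso_rep_def by blast

definition rhom :: "nat \<Rightarrow> nat \<Rightarrow> vtx set \<Rightarrow> 'a::field rep \<Rightarrow> 'a rep \<Rightarrow> (vtx \<Rightarrow> 'a mat) \<Rightarrow> bool" where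
  "rhom m n S X Y f \<longleftrightarrow> (\<forall>x\<in>S. f x \<in> carrier_mat (rdim Y x) (rdim X x)) \<and>
     (\<forall>x\<in>S. \<forall>y\<in>S. leq m n x y \<longrightarrow> f y * rmap X x y = rmap Y x y * f x)"

lemma homD: "rhom m n S X Y f \<Longrightarrow> x \<in> S \<Longrightarrow> f x \<in> carrier_mat (rdim Y x) (rdim X x)"
  "rhom m n S X Y f \<Longrightarrow> x \<in> S \<Longrightarrow> y \<in> S \<Longrightarrow> leq m n x y \<Longrightarrow> f y * rmap X x y = rmap Y x y * f x"
  unfolding rhom_def by auto

lemma hom_comp:
  assumes X: "is_rep m n S X" and Y: "is_rep m n S Y" and Z: "is_rep m n S Z"
    and f: "rhom m n S X Y f" and g: "rhom m n S Y Z g"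
  shows "rhom m n S X Z (\<lambda>x. g x * f x)"
  unfolding rhom_def
proof (intro conjI ballI impI)
  fix x assume x: "x \<in> S"
  show "g x * f x \<in> carrier_mat (rdim Z x) (rdim X x)" by (rule mult_carrier_mat[OF homD(1)[OF g x] homD(1)[OF f x]])
next
  fix x y assume xy: "x \<in> S" "y \<in> S" "leq m n x y"
  note c = homD(1)[OF f xy(1)] homD(1)[OF f xy(2)] homD(1)[OF g xy(1)] homD(1)[OF g xy(2)]
    rep_carrier[OF X xy] rep_carrier[OF Y xy] rep_carrier[OF Z xy]
  have "g y * f y * rmap X x y = g y * (f y * rmap X x y)" by (rule assoc_mult_mat[OF c(4) c(2) c(5)])
  also have "\<dots> = g y * (rmap Y x y * f x)" using homD(2)[OF f xy] by simp
  also have "\<dots> = (g y * rmap Y x y) * f x" by (rule assoc_mult_mat[OF c(4) c(6) c(1), symmetric])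
  also have "\<dots> = (rmap Z x y * g x) * f x" using homD(2)[OF g xy] by simp
  also have "\<dots> = rmap Z x y * (g x * f x)" by (rule assoc_mult_mat[OF c(7) c(3) c(1)])
  finally show "g y * f y * rmap X x y = rmap Z x y * (g x * f x)" .
qed

lemma hom_smult:
  assumes X: "is_rep m n S X" and Y: "is_rep m n S Y" and f: "rhom m n S X Y f"
  shows "rhom m n S X Y (\<lambda>x. c \<cdot>\<^sub>m f x)"
  unfolding rhom_def
proof (intro conjI ballI impI)
  fix x assume x: "x \<in> S"
  show "c \<cdot>\<^sub>m f x \<in> carrier_mat (rdim Y x) (rdim X x)" using homD(1)[OF f x] by simp
next
  fix x y assume xy: "x \<in> S" "y \<in> S" "leq m n x y"
  note cc = homD(1)[OF f xy(1)] homD(1)[OF f xy(2)] rep_carrier[OF X xy] rep_carrier[OF Y xy]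
  have "c \<cdot>\<^sub>m f y * rmap X x y = c \<cdot>\<^sub>m (f y * rmap X x y)" using cc by (simp add: mult_smult_assoc_mat)
  also have "\<dots> = c \<cdot>\<^sub>m (rmap Y x y * f x)" using homD(2)[OF f xy] by simp
  also have "\<dots> = rmap Y x y * (c \<cdot>\<^sub>m f x)" using cc by (simp add: mult_smult_distrib)
  finally show "c \<cdot>\<^sub>m f y * rmap X x y = rmap Y x y * (c \<cdot>\<^sub>m f x)" .
qed

lemma invertible_inv:
  assumes "f \<in> carrier_mat k l" "invertible_mat (f :: 'a::field mat)"
  shows "\<exists>g. g \<in> carrier_mat l k \<and> g * f = 1\<^sub>m l \<and> f * g = 1\<^sub>m k \<and> k = l"
proof -
  from assms(2) obtain B where sq: "square_mat f" and B1: "f * B = 1\<^sub>m (dim_row f)" and B2: "B * f = 1\<^sub>m (dim_row B)"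
    unfolding invertible_mat_def inverts_mat_def by auto
  have kl: "k = l" using sq assms(1) by auto
  have "dim_row (B * f) = dim_row B" by simp
  have dB: "dim_col B = k" using B1 assms(1) by (metis index_mult_mat(3) index_one_mat(3) carrier_matD(1))
  have dB2: "dim_row B = l" using B2 assms(1) by (metis index_mult_mat(3) index_one_mat(3) carrier_matD(2))
  show ?thesis using B1 B2 assms(1) kl dB dB2 by (intro exI[of _ B]) auto
qed

lemma iso_homs:
  assumes M: "is_rep m n S M" and N: "is_rep m n S N" and iso: "iso_rep m n S M N"
  shows "\<exists>f g. rhom m n S M N f \<and> rhom m n S N M g \<and>
     (\<forall>x\<in>S. g x * f x = 1\<^sub>m (rdim M x) \<and> f x * g x = 1\<^sub>m (rdim N x) \<and> rdim M x = rdim N x)"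
proof -
  from iso obtain f where f1: "\<forall>x\<in>S. f x \<in> carrier_mat (rdim N x) (rdim M x) \<and> invertible_mat (f x)"
    and f2: "\<forall>x\<in>S. \<forall>y\<in>S. leq m n x y \<longrightarrow> f y * rmap M x y = rmap N x y * f x"
    unfolding iso_rep_def by auto
  have "\<forall>x\<in>S. \<exists>g. g \<in> carrier_mat (rdim M x) (rdim N x) \<and> g * f x = 1\<^sub>m (rdim M x) \<and> f x * g = 1\<^sub>m (rdim N x) \<and> rdim N x = rdim M x"
  proof
    fix x assume "x \<in> S"
    hence "f x \<in> carrier_mat (rdim N x) (rdim M x)" "invertible_mat (f x)" using f1 by auto
    from invertible_inv[OF this] show "\<exists>g. g \<in> carrier_mat (rdim M x) (rdim N x) \<and> g * f x = 1\<^sub>m (rdim M x) \<and> f x * g = 1\<^sub>m (rdim N x) \<and> rdim N x = rdim M x" .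
  qed
  then obtain g where g: "\<And>x. x \<in> S \<Longrightarrow> g x \<in> carrier_mat (rdim M x) (rdim N x) \<and> g x * f x = 1\<^sub>m (rdim M x) \<and> f x * g x = 1\<^sub>m (rdim N x) \<and> rdim N x = rdim M x"
    by metis
  have hf: "rhom m n S M N f" using f1 f2 unfolding rhom_def by auto
  have hg: "rhom m n S N M g" unfolding rhom_def
  proof (intro conjI ballI impI)
    fix x assume "x \<in> S" thus "g x \<in> carrier_mat (rdim M x) (rdim N x)" using g by metis
  next
    fix x y assume xy: "x \<in> S" "y \<in> S" "leq m n x y"
    have gx: "g x \<in> carrier_mat (rdim M x) (rdim N x)" "f x * g x = 1\<^sub>m (rdim N x)" using g[OF xy(1)] by auto
    have gy: "g y \<in> carrier_mat (rdim M y) (rdim N y)" "g y * f y = 1\<^sub>m (rdim M y)" using g[OF xy(2)] by auto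
    have fx: "f x \<in> carrier_mat (rdim N x) (rdim M x)" using f1 xy(1) by auto
    have fy: "f y \<in> carrier_mat (rdim N y) (rdim M y)" using f1 xy(2) by auto
    have RM: "rmap M x y \<in> carrier_mat (rdim M y) (rdim M x)" by (rule rep_carrier[OF M xy])
    have RN: "rmap N x y \<in> carrier_mat (rdim N y) (rdim N x)" by (rule rep_carrier[OF N xy])
    have GR: "g y * rmap N x y \<in> carrier_mat (rdim M y) (rdim N x)" using gy(1) RN by simp
    have "g y * rmap N x y = (g y * rmap N x y) * (f x * g x)" using gx(2) right_mult_one_mat[OF GR] by simp
    also have "\<dots> = ((g y * rmap N x y) * f x) * g x" using assoc_mult_mat[OF GR fx gx(1)] by simp
    also have "(g y * rmap N x y) * f x = g y * (rmap N x y * f x)" by (rule assoc_mult_mat[OF gy(1) RN fx])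
    also have "\<dots> = g y * (f y * rmap M x y)" using f2 xy by simp
    also have "\<dots> = (g y * f y) * rmap M x y" by (rule assoc_mult_mat[OF gy(1) fy RM, symmetric])
    also have "\<dots> = rmap M x y" using gy(2) left_mult_one_mat[OF RM] by simp
    finally show "g y * rmap N x y = rmap M x y * g x" .
  qed
  show ?thesis using hf hg g by (intro exI[of _ f] exI[of _ g]) metis
qed

lemma homs_iso:
  assumes f: "rhom m n S M N f" and g: "rhom m n S N M g"
    and inv: "\<forall>x\<in>S. g x * f x = 1\<^sub>m (rdim M x) \<and> f x * g x = 1\<^sub>m (rdim N x) \<and> rdim M x = rdim N x"
  shows "iso_rep m n S M N"
  unfolding iso_rep_def
proof (intro exI[of _ f] conjI ballI impI)
  fix x assume x: "x \<in> S"
  show "f x \<in> carrier_mat (rdim N x) (rdim M x)" using homD(1)[OF f x] .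
  have cf: "f x \<in> carrier_mat (rdim N x) (rdim M x)" "g x \<in> carrier_mat (rdim M x) (rdim N x)"
    using homD(1)[OF f x] homD(1)[OF g x] by auto
  show "invertible_mat (f x)" unfolding invertible_mat_def inverts_mat_def
    using cf inv x by (intro conjI exI[of _ "g x"]) (auto simp: square_mat.simps)
qed (use homD(2)[OF f] in auto)

lemma invertible_one: "invertible_mat (1\<^sub>m k :: 'a::field mat)"
  unfolding invertible_mat_def inverts_mat_def by (auto simp: square_mat.simps intro!: exI[of _ "1\<^sub>m k"])

lemma iso_eq:
  assumes M: "is_rep m n S M" and d: "\<forall>x\<in>S. rdim M x = rdim N x"
    and r: "\<forall>x\<in>S. \<forall>y\<in>S. leq m n x y \<longrightarrow> rmap M x y = rmap N x y"
  shows "iso_rep m n S M N"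
  unfolding iso_rep_def
proof (intro exI[of _ "\<lambda>x. 1\<^sub>m (rdim M x)"] conjI ballI impI)
  fix x assume x: "x \<in> S"
  show "1\<^sub>m (rdim M x) \<in> carrier_mat (rdim N x) (rdim M x)" using d x by simp
  show "invertible_mat (1\<^sub>m (rdim M x))" 
    unfolding invertible_mat_def inverts_mat_def by (auto simp: square_mat.simps intro!: exI[of _ "1\<^sub>m (rdim M x)"])
next
  fix x y assume xy: "x \<in> S" "y \<in> S" "leq m n x y"
  have R: "rmap M x y \<in> carrier_mat (rdim M y) (rdim M x)" by (rule rep_carrier[OF M xy])
  show "1\<^sub>m (rdim M y) * rmap M x y = rmap N x y * 1\<^sub>m (rdim M x)"
    using r xy left_mult_one_mat[OF R] right_mult_one_mat[OF R] by simp
qed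

lemma iso_refl: "is_rep m n S M \<Longrightarrow> iso_rep m n S M M"
  by (rule iso_eq) auto

lemma iso_sym:
  assumes M: "is_rep m n S M" and N: "is_rep m n S N" and iso: "iso_rep m n S M N"
  shows "iso_rep m n S N M"
proof -
  obtain f g where fg: "rhom m n S M N f" "rhom m n S N M g"
     "\<forall>x\<in>S. g x * f x = 1\<^sub>m (rdim M x) \<and> f x * g x = 1\<^sub>m (rdim N x) \<and> rdim M x = rdim N x"
    using iso_homs[OF M N iso] by blast
  show ?thesis by (rule homs_iso[OF fg(2) fg(1)]) (use fg(3) in auto)
qed

lemma iso_trans:
  assumes M: "is_rep m n S M" and N: "is_rep m n S N" and L: "is_rep m n S L"
    and "iso_rep m n S M N" "iso_rep m n S N L"
  shows "iso_rep m n S M L"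
proof -
  obtain f g where fg: "rhom m n S M N f" "rhom m n S N M g"
     "\<forall>x\<in>S. g x * f x = 1\<^sub>m (rdim M x) \<and> f x * g x = 1\<^sub>m (rdim N x) \<and> rdim M x = rdim N x"
    using iso_homs[OF M N assms(4)] by blast
  obtain f' g' where fg': "rhom m n S N L f'" "rhom m n S L N g'"
     "\<forall>x\<in>S. g' x * f' x = 1\<^sub>m (rdim N x) \<and> f' x * g' x = 1\<^sub>m (rdim L x) \<and> rdim N x = rdim L x"
    using iso_homs[OF N L assms(5)] by blast
  show ?thesis
  proof (rule homs_iso[OF hom_comp[OF M N L fg(1) fg'(1)] hom_comp[OF L N M fg'(2) fg(2)]], intro ballI conjI)
    fix x assume x: "x \<in> S"
    note c = homD(1)[OF fg(1) x] homD(1)[OF fg(2) x] homD(1)[OF fg'(1) x] homD(1)[OF fg'(2) x]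
    have e1: "g' x * f' x = 1\<^sub>m (rdim N x)" "f x * g x = 1\<^sub>m (rdim N x)" "g x * f x = 1\<^sub>m (rdim M x)"
      "f' x * g' x = 1\<^sub>m (rdim L x)" using fg(3) fg'(3) x by auto
    have "g x * g' x * (f' x * f x) = g x * (g' x * (f' x * f x))"
      by (rule assoc_mult_mat[OF c(2) c(4) mult_carrier_mat[OF c(3) c(1)]])
    also have "g' x * (f' x * f x) = (g' x * f' x) * f x" by (rule assoc_mult_mat[OF c(4) c(3) c(1), symmetric])
    also have "\<dots> = f x" using e1 left_mult_one_mat[OF c(1)] by simp
    finally show "g x * g' x * (f' x * f x) = 1\<^sub>m (rdim M x)" using e1 by simp
    have "f' x * f x * (g x * g' x) = f' x * (f x * (g x * g' x))"
      by (rule assoc_mult_mat[OF c(3) c(1) mult_carrier_mat[OF c(2) c(4)]])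
    also have "f x * (g x * g' x) = (f x * g x) * g' x" by (rule assoc_mult_mat[OF c(1) c(2) c(4), symmetric])
    also have "\<dots> = g' x" using e1 left_mult_one_mat[OF c(4)] by simp
    finally show "f' x * f x * (g x * g' x) = 1\<^sub>m (rdim L x)" using e1 by simp
    show "rdim M x = rdim L x" using fg(3) fg'(3) x by auto
  qed
qed

lemma iso_dims: 
  fixes M N :: "'a::field rep"
  assumes "iso_rep m n S M N" "x \<in> S" shows "rdim M x = rdim N x"
proof -
  obtain f :: "vtx \<Rightarrow> 'a mat" where "\<forall>x\<in>S. f x \<in> carrier_mat (rdim N x) (rdim M x) \<and> invertible_mat (f x)"
    using assms(1) unfolding iso_rep_def by blast
  hence "f x \<in> carrier_mat (rdim N x) (rdim M x)" "invertible_mat (f x)" using assms(2) by auto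
  thus ?thesis unfolding invertible_mat_def square_mat.simps by simp
qed




section \<open>Binary direct sums\<close>

definition bsum :: "'a::field rep \<Rightarrow> 'a rep \<Rightarrow> 'a rep" where
  "bsum A B = \<lparr>rdim = (\<lambda>x. rdim A x + rdim B x),
     rmap = (\<lambda>x y. four_block_mat (rmap A x y) (0\<^sub>m (dim_row (rmap A x y)) (dim_col (rmap B x y)))
        (0\<^sub>m (dim_row (rmap B x y)) (dim_col (rmap A x y))) (rmap B x y))\<rparr>"

lemma dsum_Cons: "dsum (N # Ls) = bsum N (dsum Ls)"
  by (simp add: dsum_def bsum_def Let_def)

lemma dsum_single: "dsum [B] = B"
proof -
  have "(\<lambda>x y. diag_block_mat [rmap B x y]) = rmap B" by (simp only: diag_block_mat_singleton)
  thus ?thesis by (cases B) (simp add: dsum_def del: diag_block_mat.simps)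
qed

lemma dsum_two: "dsum [A,B] = bsum A B"
  unfolding dsum_Cons[of A "[B]"] dsum_single ..

lemma rdim_bsum[simp]: "rdim (bsum A B) x = rdim A x + rdim B x"
  by (simp add: bsum_def)

lemma rmap_bsum:
  assumes A: "is_rep m n S A" and B: "is_rep m n S B" and xy: "x \<in> S" "y \<in> S" "leq m n x y"
  shows "rmap (bsum A B) x y = four_block_mat (rmap A x y) (0\<^sub>m (rdim A y) (rdim B x))
     (0\<^sub>m (rdim B y) (rdim A x)) (rmap B x y)"
  using rep_carrier[OF A xy] rep_carrier[OF B xy] by (simp add: bsum_def)

lemma is_rep_bsum:
  assumes A: "is_rep m n S A" and B: "is_rep m n S B"
  shows "is_rep m n S (bsum A B)"
  unfolding is_rep_def
proof (intro conjI ballI impI)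
  show "S \<subseteq> grid m n" using A unfolding is_rep_def by auto
next
  fix x y assume xy: "x \<in> S" "y \<in> S" "leq m n x y"
  show "rmap (bsum A B) x y \<in> carrier_mat (rdim (bsum A B) y) (rdim (bsum A B) x)"
    using rmap_bsum[OF A B xy] rep_carrier[OF A xy] rep_carrier[OF B xy] by simp
next
  fix x assume x: "x \<in> S"
  have g: "x \<in> grid m n" using A x unfolding is_rep_def by auto
  have l: "leq m n x x" by (rule leq_refl[OF g])
  show "rmap (bsum A B) x x = 1\<^sub>m (rdim (bsum A B) x)"
    using rmap_bsum[OF A B x x l] rep_id[OF A x] rep_id[OF B x] by simp
next
  fix x y z assume xyz: "x \<in> S" "y \<in> S" "z \<in> S" "leq m n x y" "leq m n y z"
  have xz: "leq m n x z" using leq_trans xyz by blast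
  note c1 = rep_carrier[OF A xyz(1,2,4)] rep_carrier[OF B xyz(1,2,4)]
  note c2 = rep_carrier[OF A xyz(2,3,5)] rep_carrier[OF B xyz(2,3,5)]
  have "rmap (bsum A B) y z * rmap (bsum A B) x y =
     four_block_mat (rmap A y z * rmap A x y + 0\<^sub>m (rdim A z) (rdim B y) * 0\<^sub>m (rdim B y) (rdim A x))
       (rmap A y z * 0\<^sub>m (rdim A y) (rdim B x) + 0\<^sub>m (rdim A z) (rdim B y) * rmap B x y)
       (0\<^sub>m (rdim B z) (rdim A y) * rmap A x y + rmap B y z * 0\<^sub>m (rdim B y) (rdim A x))
       (0\<^sub>m (rdim B z) (rdim A y) * 0\<^sub>m (rdim A y) (rdim B x) + rmap B y z * rmap B x y)"
    unfolding rmap_bsum[OF A B xyz(1,2,4)] rmap_bsum[OF A B xyz(2,3,5)]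
    by (rule mult_four_block_mat[OF c2(1) _ _ c2(2) c1(1) _ _ c1(2)]) auto
  also have "\<dots> = four_block_mat (rmap A x z) (0\<^sub>m (rdim A z) (rdim B x)) (0\<^sub>m (rdim B z) (rdim A x)) (rmap B x z)"
    using c1 c2 rep_comp[OF A xyz] rep_comp[OF B xyz] rep_carrier[OF A xyz(1,3) xz] rep_carrier[OF B xyz(1,3) xz] by simp
  also have "\<dots> = rmap (bsum A B) x z" using rmap_bsum[OF A B xyz(1,3) xz] by simp
  finally show "rmap (bsum A B) y z * rmap (bsum A B) x y = rmap (bsum A B) x z" .
qed

lemma is_rep_dsum:
  assumes "S \<subseteq> grid m n" "\<forall>L\<in>set Ls. is_rep m n S L"
  shows "is_rep m n S (dsum Ls)"
  using assms(2)
proof (induction Ls)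
  case Nil
  show ?case using assms(1) unfolding is_rep_def dsum_def by auto
next
  case (Cons L Ls)
  thus ?case unfolding dsum_Cons by (intro is_rep_bsum) auto
qed

lemma hom_inl:
  assumes A: "is_rep m n S A" and B: "is_rep m n S B"
  shows "rhom m n S A (bsum A B) (\<lambda>x. inl (rdim A x) (rdim B x))"
  unfolding rhom_def
proof (intro conjI ballI impI)
  fix x y assume xy: "x \<in> S" "y \<in> S" "leq m n x y"
  note c = rep_carrier[OF A xy] rep_carrier[OF B xy]
  show "inl (rdim A y) (rdim B y) * rmap A x y = rmap (bsum A B) x y * inl (rdim A x) (rdim B x)"
  proof (rule eq_matI)
    fix i j assume ij: "i < dim_row (rmap (bsum A B) x y * inl (rdim A x) (rdim B x))"
      "j < dim_col (rmap (bsum A B) x y * inl (rdim A x) (rdim B x))"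
    hence ij': "i < rdim A y + rdim B y" "j < rdim A x" using rmap_bsum[OF A B xy] c by auto
    have 1: "(inl (rdim A y) (rdim B y) * rmap A x y) $$ (i,j) = (if i < rdim A y then rmap A x y $$ (i,j) else 0)"
      by (rule inl_mult_index[OF c(1) ij'])
    have 2: "(rmap (bsum A B) x y * inl (rdim A x) (rdim B x)) $$ (i,j) = rmap (bsum A B) x y $$ (i,j)"
      by (rule mult_inl_index[OF _ ij']) (use rmap_bsum[OF A B xy] c in simp)
    show "(inl (rdim A y) (rdim B y) * rmap A x y) $$ (i,j) = (rmap (bsum A B) x y * inl (rdim A x) (rdim B x)) $$ (i,j)"
      unfolding 1 2 unfolding rmap_bsum[OF A B xy] using ij' c by auto
  qed (use rmap_bsum[OF A B xy] c in auto)
qed auto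

lemma hom_inr:
  assumes A: "is_rep m n S A" and B: "is_rep m n S B"
  shows "rhom m n S B (bsum A B) (\<lambda>x. inr (rdim A x) (rdim B x))"
  unfolding rhom_def
proof (intro conjI ballI impI)
  fix x y assume xy: "x \<in> S" "y \<in> S" "leq m n x y"
  note c = rep_carrier[OF A xy] rep_carrier[OF B xy]
  show "inr (rdim A y) (rdim B y) * rmap B x y = rmap (bsum A B) x y * inr (rdim A x) (rdim B x)"
  proof (rule eq_matI)
    fix i j assume ij: "i < dim_row (rmap (bsum A B) x y * inr (rdim A x) (rdim B x))"
      "j < dim_col (rmap (bsum A B) x y * inr (rdim A x) (rdim B x))"
    hence ij': "i < rdim A y + rdim B y" "j < rdim B x" using rmap_bsum[OF A B xy] c by auto
    have 1: "(inr (rdim A y) (rdim B y) * rmap B x y) $$ (i,j) = (if rdim A y \<le> i then rmap B x y $$ (i - rdim A y,j) else 0)"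
      by (rule inr_mult_index[OF c(2) ij'])
    have 2: "(rmap (bsum A B) x y * inr (rdim A x) (rdim B x)) $$ (i,j) = rmap (bsum A B) x y $$ (i,rdim A x + j)"
      by (rule mult_inr_index[OF _ ij']) (use rmap_bsum[OF A B xy] c in simp)
    show "(inr (rdim A y) (rdim B y) * rmap B x y) $$ (i,j) = (rmap (bsum A B) x y * inr (rdim A x) (rdim B x)) $$ (i,j)"
      unfolding 1 2 unfolding rmap_bsum[OF A B xy] using ij' c by auto
  qed (use rmap_bsum[OF A B xy] c in auto)
qed auto

lemma hom_prl:
  assumes A: "is_rep m n S A" and B: "is_rep m n S B"
  shows "rhom m n S (bsum A B) A (\<lambda>x. prl (rdim A x) (rdim B x))"
  unfolding rhom_def
proof (intro conjI ballI impI)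
  fix x y assume xy: "x \<in> S" "y \<in> S" "leq m n x y"
  note c = rep_carrier[OF A xy] rep_carrier[OF B xy]
  show "prl (rdim A y) (rdim B y) * rmap (bsum A B) x y = rmap A x y * prl (rdim A x) (rdim B x)"
  proof (rule eq_matI)
    fix i j assume ij: "i < dim_row (rmap A x y * prl (rdim A x) (rdim B x))"
      "j < dim_col (rmap A x y * prl (rdim A x) (rdim B x))"
    hence ij': "i < rdim A y" "j < rdim A x + rdim B x" using c by auto
    have 1: "(rmap A x y * prl (rdim A x) (rdim B x)) $$ (i,j) = (if j < rdim A x then rmap A x y $$ (i,j) else 0)"
      by (rule mult_prl_index[OF c(1) ij'])
    have 2: "(prl (rdim A y) (rdim B y) * rmap (bsum A B) x y) $$ (i,j) = rmap (bsum A B) x y $$ (i,j)"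
      by (rule prl_mult_index[OF _ ij']) (use rmap_bsum[OF A B xy] c in simp)
    show "(prl (rdim A y) (rdim B y) * rmap (bsum A B) x y) $$ (i,j) = (rmap A x y * prl (rdim A x) (rdim B x)) $$ (i,j)"
      unfolding 1 2 unfolding rmap_bsum[OF A B xy] using ij' c by auto
  qed (use rmap_bsum[OF A B xy] c in auto)
qed auto

lemma hom_prr:
  assumes A: "is_rep m n S A" and B: "is_rep m n S B"
  shows "rhom m n S (bsum A B) B (\<lambda>x. prr (rdim A x) (rdim B x))"
  unfolding rhom_def
proof (intro conjI ballI impI)
  fix x y assume xy: "x \<in> S" "y \<in> S" "leq m n x y"
  note c = rep_carrier[OF A xy] rep_carrier[OF B xy]
  show "prr (rdim A y) (rdim B y) * rmap (bsum A B) x y = rmap B x y * prr (rdim A x) (rdim B x)"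
  proof (rule eq_matI)
    fix i j assume ij: "i < dim_row (rmap B x y * prr (rdim A x) (rdim B x))"
      "j < dim_col (rmap B x y * prr (rdim A x) (rdim B x))"
    hence ij': "i < rdim B y" "j < rdim A x + rdim B x" using c by auto
    have 1: "(rmap B x y * prr (rdim A x) (rdim B x)) $$ (i,j) = (if rdim A x \<le> j then rmap B x y $$ (i,j - rdim A x) else 0)"
      by (rule mult_prr_index[OF c(2) ij'])
    have 2: "(prr (rdim A y) (rdim B y) * rmap (bsum A B) x y) $$ (i,j) = rmap (bsum A B) x y $$ (rdim A y + i,j)"
      by (rule prr_mult_index[OF _ ij']) (use rmap_bsum[OF A B xy] c in simp)
    show "(prr (rdim A y) (rdim B y) * rmap (bsum A B) x y) $$ (i,j) = (rmap B x y * prr (rdim A x) (rdim B x)) $$ (i,j)"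
      unfolding 1 2 unfolding rmap_bsum[OF A B xy] using ij' c by auto
  qed (use rmap_bsum[OF A B xy] c in auto)
qed auto




lemma mat_assoc4:
  assumes "P \<in> carrier_mat p q" "Q \<in> carrier_mat q r" "U \<in> carrier_mat r s" "V \<in> carrier_mat s t"
  shows "(P * Q) * (U * V) = P * (Q * U) * V"
proof -
  have "(P * Q) * (U * V) = P * (Q * (U * V))" by (rule assoc_mult_mat[OF assms(1,2) mult_carrier_mat[OF assms(3,4)]])
  also have "Q * (U * V) = (Q * U) * V" by (rule assoc_mult_mat[OF assms(2,3,4), symmetric])
  also have "P * ((Q * U) * V) = (P * (Q * U)) * V" by (rule assoc_mult_mat[OF assms(1) mult_carrier_mat[OF assms(2,3)] assms(4), symmetric])
  finally show ?thesis .
qed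

lemma mult_11_index:
  assumes "P \<in> carrier_mat 1 1" "Q \<in> carrier_mat 1 1"
  shows "(P * Q) $$ (0,0) = P $$ (0,0) * Q $$ (0,0)"
  using assms by (simp add: scalar_prod_def)

lemma mult_empty_index:
  assumes "P \<in> carrier_mat k 0" "Q \<in> carrier_mat 0 l" "i < k" "j < l"
  shows "(P * Q) $$ (i,j) = 0"
  using assms by (simp add: scalar_prod_def)

lemma dim_le_of_factor:
  assumes B: "(B :: 'a::field mat) \<in> carrier_mat d c" and A: "A \<in> carrier_mat c d" and BA: "B * A = 1\<^sub>m d"
  shows "d \<le> c"
proof (rule ccontr)
  assume "\<not> d \<le> c"
  hence cd: "c < d" by simp
  define B' where "B' = four_block_mat B (0\<^sub>m d (d-c)) (0\<^sub>m 0 c) (0\<^sub>m 0 (d-c))"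
  define A' where "A' = four_block_mat A (0\<^sub>m c 0) (0\<^sub>m (d-c) d) (0\<^sub>m (d-c) 0)"
  have cdd: "c + (d - c) = d" using cd by simp
  have B'c: "B' \<in> carrier_mat d d" unfolding B'_def
    using four_block_carrier_mat[OF B zero_carrier_mat[of 0 "d-c"], of "0\<^sub>m d (d-c)" "0\<^sub>m 0 c"] cdd by simp
  have A'c: "A' \<in> carrier_mat d d" unfolding A'_def
    using four_block_carrier_mat[OF A zero_carrier_mat[of "d-c" 0], of "0\<^sub>m c 0" "0\<^sub>m (d-c) d"] cdd by simp
  have "B' * A' = four_block_mat (B * A + 0\<^sub>m d (d-c) * 0\<^sub>m (d-c) d) (B * 0\<^sub>m c 0 + 0\<^sub>m d (d-c) * 0\<^sub>m (d-c) 0)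
      (0\<^sub>m 0 c * A + 0\<^sub>m 0 (d-c) * 0\<^sub>m (d-c) d) (0\<^sub>m 0 c * 0\<^sub>m c 0 + 0\<^sub>m 0 (d-c) * 0\<^sub>m (d-c) 0)"
    unfolding A'_def B'_def by (rule mult_four_block_mat[OF B _ _ _ A]) auto
  also have "\<dots> = four_block_mat (1\<^sub>m d) (0\<^sub>m d 0) (0\<^sub>m 0 d) (0\<^sub>m 0 0)"
    using A B BA by simp
  also have "\<dots> = 1\<^sub>m d" by (rule fb_zero_corner) simp
  finally have prod: "B' * A' = 1\<^sub>m d" .
  have "det B' = 0"
  proof -
    let ?v = "unit_vec d (d - 1) :: 'a vec"
    have "B' *\<^sub>v ?v = 0\<^sub>v d"
    proof (rule eq_vecI)
      fix i assume "i < dim_vec (0\<^sub>v d :: 'a vec)"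
      hence i: "i < d" by simp
      have "(B' *\<^sub>v ?v) $ i = row B' i \<bullet> ?v" using B'c i by simp
      also have "\<dots> = row B' i $ (d - 1)" using cd by simp
      also have "\<dots> = B' $$ (i, d - 1)" using B'c i cd by simp
      also have "\<dots> = 0" unfolding B'_def using B i cd by simp
      finally show "(B' *\<^sub>v ?v) $ i = 0\<^sub>v d $ i" using i by simp
    qed (use B'c in simp)
    moreover have "?v \<in> carrier_vec d" by simp
    moreover have "?v \<noteq> 0\<^sub>v d"
    proof
      assume "?v = 0\<^sub>v d"
      hence "?v $ (d - 1) = 0\<^sub>v d $ (d - 1)" by simp
      thus False using cd by simp
    qed
    ultimately show ?thesis using det_0_iff_vec_prod_zero_field[OF B'c] by blast
  qed
  hence "det (B' * A') = 0" using det_mult[OF B'c A'c] by simp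
  thus False using prod by simp
qed

section \<open>Thin representations\<close>

lemma rdim_intv[simp]: "rdim (intv_rep I) x = (if x \<in> I then 1 else 0)"
  by (simp add: intv_rep_def)

lemma rmap_intv_in: "x \<in> I \<Longrightarrow> y \<in> I \<Longrightarrow> rmap (intv_rep I) x y = 1\<^sub>m 1"
  by (simp add: intv_rep_def)

lemma rmap_intv_out: "\<not> (x \<in> I \<and> y \<in> I) \<Longrightarrow> rmap (intv_rep I) x y = 0\<^sub>m (if y \<in> I then 1 else 0) (if x \<in> I then 1 else 0)"
  by (auto simp: intv_rep_def)

lemma rmap_intv_carrier: "rmap (intv_rep I) x y \<in> carrier_mat (if y \<in> I then 1 else 0) (if x \<in> I then 1 else 0)"
  by (simp add: intv_rep_def)

lemma empty_col_mat: "A \<in> carrier_mat k 0 \<Longrightarrow> A = 0\<^sub>m k 0"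
  by (intro eq_matI) auto
lemma empty_row_mat: "A \<in> carrier_mat 0 k \<Longrightarrow> A = 0\<^sub>m 0 k"
  by (intro eq_matI) auto

lemma is_rep_intv:
  assumes "S \<subseteq> grid m n"
    and conv: "\<forall>x\<in>S. \<forall>y\<in>S. \<forall>z\<in>S. leq m n x y \<longrightarrow> leq m n y z \<longrightarrow> x \<in> I \<longrightarrow> z \<in> I \<longrightarrow> y \<in> I"
  shows "is_rep m n S (intv_rep I :: 'a::field rep)"
  unfolding is_rep_def
proof (intro conjI ballI impI)
  fix x assume "x \<in> S"
  show "rmap (intv_rep I) x x = (1\<^sub>m (rdim (intv_rep I :: 'a rep) x) :: 'a mat)"
  proof (cases "x \<in> I")
    case True thus ?thesis by (simp add: rmap_intv_in)
  next
    case False thus ?thesis by (simp add: rmap_intv_out) (rule eq_matI, auto)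
  qed
next
  fix x y assume "x \<in> S" "y \<in> S" "leq m n x y"
  show "rmap (intv_rep I) x y \<in> carrier_mat (rdim (intv_rep I :: 'a rep) y) (rdim (intv_rep I :: 'a rep) x)"
    using rmap_intv_carrier[of I x y] by simp
next
  fix x y z assume xyz: "x \<in> S" "y \<in> S" "z \<in> S" "leq m n x y" "leq m n y z"
  let ?R = "rmap (intv_rep I :: 'a rep)"
  have c1: "?R x y \<in> carrier_mat (if y \<in> I then 1 else 0) (if x \<in> I then 1 else 0)" by (rule rmap_intv_carrier)
  have c2: "?R y z \<in> carrier_mat (if z \<in> I then 1 else 0) (if y \<in> I then 1 else 0)" by (rule rmap_intv_carrier)
  have c3: "?R x z \<in> carrier_mat (if z \<in> I then 1 else 0) (if x \<in> I then 1 else 0)" by (rule rmap_intv_carrier)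
  have c4: "?R y z * ?R x y \<in> carrier_mat (if z \<in> I then 1 else 0) (if x \<in> I then 1 else 0)"
    by (rule mult_carrier_mat[OF c2 c1])
  show "?R y z * ?R x y = ?R x z"
  proof (cases "x \<in> I \<and> z \<in> I")
    case True
    hence "y \<in> I" using conv xyz by blast
    thus ?thesis using True by (simp add: rmap_intv_in)
  next
    case False
    show ?thesis
    proof (cases "x \<in> I")
      case False
      have "?R y z * ?R x y = 0\<^sub>m (if z \<in> I then 1 else 0) 0" using c4 False by (intro empty_col_mat) simp
      moreover have "?R x z = 0\<^sub>m (if z \<in> I then 1 else 0) 0" using c3 False by (intro empty_col_mat) simp
      ultimately show ?thesis by simp
    next
      case True
      hence zI: "z \<notin> I" using \<open>\<not> (x \<in> I \<and> z \<in> I)\<close> by simp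
      have "?R y z * ?R x y = 0\<^sub>m 0 1" using c4 True zI by (intro empty_row_mat) simp
      moreover have "?R x z = 0\<^sub>m 0 1" using c3 True zI by (intro empty_row_mat) simp
      ultimately show ?thesis by simp
    qed
  qed
qed (use assms(1) in auto)

definition cconn :: "nat \<Rightarrow> nat \<Rightarrow> vtx set \<Rightarrow> bool" where
  "cconn m n D \<longleftrightarrow> (\<forall>x\<in>D. \<forall>y\<in>D. (\<lambda>a b. a \<in> D \<and> b \<in> D \<and> (leq m n a b \<or> leq m n b a))\<^sup>*\<^sup>* x y)"

lemma pair_const_step:
  assumes N: "is_rep m n S N" and F: "rhom m n S (intv_rep I) N F" and G: "rhom m n S N (intv_rep I) G"
    and xy: "x \<in> S" "y \<in> S" "leq m n x y" "x \<in> I" "y \<in> I"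
  shows "G y * F y = G x * F x"
proof -
  have Fx: "F x \<in> carrier_mat (rdim N x) 1" using homD(1)[OF F xy(1)] xy by simp
  have Fy: "F y \<in> carrier_mat (rdim N y) 1" using homD(1)[OF F xy(2)] xy by simp
  have Gx: "G x \<in> carrier_mat 1 (rdim N x)" using homD(1)[OF G xy(1)] xy by simp
  have Gy: "G y \<in> carrier_mat 1 (rdim N y)" using homD(1)[OF G xy(2)] xy by simp
  have R: "rmap N x y \<in> carrier_mat (rdim N y) (rdim N x)" by (rule rep_carrier[OF N xy(1-3)])
  have "F y * 1\<^sub>m 1 = rmap N x y * F x" using homD(2)[OF F xy(1-3)] unfolding rmap_intv_in[OF xy(4,5)] .
  hence f: "F y = rmap N x y * F x" using Fy by simp
  have "G y * rmap N x y = 1\<^sub>m 1 * G x" using homD(2)[OF G xy(1-3)] unfolding rmap_intv_in[OF xy(4,5)] .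
  hence g: "G y * rmap N x y = G x" using Gx by simp
  have "G y * F y = (G y * rmap N x y) * F x" unfolding f by (rule assoc_mult_mat[OF Gy R Fx, symmetric])
  thus ?thesis using g by simp
qed

lemma pair_const:
  assumes N: "is_rep m n S N" and F: "rhom m n S (intv_rep I) N F" and G: "rhom m n S N (intv_rep I) G"
    and cc: "cconn m n (S \<inter> I)" and x: "x \<in> S \<inter> I" and y: "y \<in> S \<inter> I"
  shows "G y * F y = G x * F x"
proof -
  have "(\<lambda>a b. a \<in> S \<inter> I \<and> b \<in> S \<inter> I \<and> (leq m n a b \<or> leq m n b a))\<^sup>*\<^sup>* x y"
    using cc x y unfolding cconn_def by blast
  thus ?thesis
  proof (induction rule: rtranclp_induct)
    case base thus ?case by simp
  next
    case (step b c)
    have "G c * F c = G b * F b"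
    proof (cases "leq m n b c")
      case True thus ?thesis using pair_const_step[OF N F G, of b c] step(2) by auto
    next
      case False thus ?thesis using pair_const_step[OF N F G, of c b] step(2) by auto
    qed
    thus ?case using step(3) by simp
  qed
qed




definition splits :: "nat \<Rightarrow> nat \<Rightarrow> vtx set \<Rightarrow> 'a::field rep \<Rightarrow> vtx \<Rightarrow> 'a rep \<Rightarrow> nat \<Rightarrow> bool" where
  "splits m n S T x0 X d \<longleftrightarrow> (\<exists>F G. (\<forall>j<d. rhom m n S T X (F j)) \<and> (\<forall>i<d. rhom m n S X T (G i)) \<and>
     (\<forall>i<d. \<forall>j<d. (G i x0 * F j x0) $$ (0,0) = (if i = j then 1 else 0)))"

definition null_rep :: "nat \<Rightarrow> nat \<Rightarrow> vtx set \<Rightarrow> 'a::field rep \<Rightarrow> vtx \<Rightarrow> 'a rep \<Rightarrow> bool" where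
  "null_rep m n S T x0 X \<longleftrightarrow> (\<forall>F G. rhom m n S T X F \<longrightarrow> rhom m n S X T G \<longrightarrow> (G x0 * F x0) $$ (0,0) = 0)"

lemma splits_iso:
  assumes T: "is_rep m n S T" and X: "is_rep m n S X" and Y: "is_rep m n S Y" and x0: "x0 \<in> S"
    and iso: "iso_rep m n S X Y" and sp: "splits m n S T x0 X d"
  shows "splits m n S T x0 Y d"
proof -
  obtain F G where FG: "\<forall>j<d. rhom m n S T X (F j)" "\<forall>i<d. rhom m n S X T (G i)"
    "\<forall>i<d. \<forall>j<d. (G i x0 * F j x0) $$ (0,0) = (if i = j then 1 else 0)"
    using sp unfolding splits_def by blast
  obtain f g where fg: "rhom m n S X Y f" "rhom m n S Y X g"
     "\<forall>x\<in>S. g x * f x = 1\<^sub>m (rdim X x) \<and> f x * g x = 1\<^sub>m (rdim Y x) \<and> rdim X x = rdim Y x"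
    using iso_homs[OF X Y iso] by blast
  show ?thesis unfolding splits_def
  proof (rule exI[of _ "\<lambda>j x. f x * F j x"], rule exI[of _ "\<lambda>i x. G i x * g x"], intro conjI allI impI)
    fix j assume "j < d"
    thus "rhom m n S T Y (\<lambda>x. f x * F j x)" using hom_comp[OF T X Y _ fg(1)] FG(1) by blast
  next
    fix i assume "i < d"
    thus "rhom m n S Y T (\<lambda>x. G i x * g x)" using hom_comp[OF Y X T fg(2)] FG(2) by blast
  next
    fix i j assume ij: "i < d" "j < d"
    have c: "G i x0 \<in> carrier_mat (rdim T x0) (rdim X x0)" "g x0 \<in> carrier_mat (rdim X x0) (rdim Y x0)"
      "f x0 \<in> carrier_mat (rdim Y x0) (rdim X x0)" "F j x0 \<in> carrier_mat (rdim X x0) (rdim T x0)"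
      using homD(1)[OF FG(2)[rule_format, OF ij(1)] x0] homD(1)[OF fg(2) x0] homD(1)[OF fg(1) x0]
        homD(1)[OF FG(1)[rule_format, OF ij(2)] x0] by auto
    have "G i x0 * g x0 * (f x0 * F j x0) = G i x0 * (g x0 * f x0) * F j x0" by (rule mat_assoc4[OF c])
    also have "\<dots> = G i x0 * F j x0" using fg(3) x0 c by simp
    finally show "(G i x0 * g x0 * (f x0 * F j x0)) $$ (0,0) = (if i = j then 1 else 0)" using FG(3) ij by simp
  qed
qed

lemma splits_skip:
  assumes T: "is_rep m n S T" and N: "is_rep m n S N" and R: "is_rep m n S R" and x0: "x0 \<in> S"
    and sp: "splits m n S T x0 R d"
  shows "splits m n S T x0 (bsum N R) d"
proof -
  obtain F G where FG: "\<forall>j<d. rhom m n S T R (F j)" "\<forall>i<d. rhom m n S R T (G i)"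
    "\<forall>i<d. \<forall>j<d. (G i x0 * F j x0) $$ (0,0) = (if i = j then 1 else 0)"
    using sp unfolding splits_def by blast
  note X = is_rep_bsum[OF N R]
  show ?thesis unfolding splits_def
  proof (rule exI[of _ "\<lambda>j x. inr (rdim N x) (rdim R x) * F j x"], rule exI[of _ "\<lambda>i x. G i x * prr (rdim N x) (rdim R x)"], intro conjI allI impI)
    fix j assume "j < d"
    thus "rhom m n S T (bsum N R) (\<lambda>x. inr (rdim N x) (rdim R x) * F j x)"
      using hom_comp[OF T R X _ hom_inr[OF N R]] FG(1) by blast
  next
    fix i assume "i < d"
    thus "rhom m n S (bsum N R) T (\<lambda>x. G i x * prr (rdim N x) (rdim R x))"
      using hom_comp[OF X R T hom_prr[OF N R]] FG(2) by blast
  next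
    fix i j assume ij: "i < d" "j < d"
    have c: "G i x0 \<in> carrier_mat (rdim T x0) (rdim R x0)" "F j x0 \<in> carrier_mat (rdim R x0) (rdim T x0)"
      using homD(1)[OF FG(2)[rule_format, OF ij(1)] x0] homD(1)[OF FG(1)[rule_format, OF ij(2)] x0] by auto
    have "G i x0 * prr (rdim N x0) (rdim R x0) * (inr (rdim N x0) (rdim R x0) * F j x0)
       = G i x0 * (prr (rdim N x0) (rdim R x0) * inr (rdim N x0) (rdim R x0)) * F j x0"
      by (rule mat_assoc4[OF c(1) prr_carrier inr_carrier c(2)])
    also have "\<dots> = G i x0 * F j x0" using c by (simp add: prr_inr)
    finally show "(G i x0 * prr (rdim N x0) (rdim R x0) * (inr (rdim N x0) (rdim R x0) * F j x0)) $$ (0,0) = (if i = j then 1 else 0)"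
      using FG(3) ij by simp
  qed
qed

lemma splits_like:
  assumes T: "is_rep m n S T" and N: "is_rep m n S N" and R: "is_rep m n S R" and x0: "x0 \<in> S"
    and T1: "rdim T x0 = 1"
    and like: "iso_rep m n S N T"
    and sp: "splits m n S T x0 R d"
  shows "splits m n S T x0 (bsum N R) (Suc d)"
proof -
  obtain F G where FG: "\<forall>j<d. rhom m n S T R (F j)" "\<forall>i<d. rhom m n S R T (G i)"
    "\<forall>i<d. \<forall>j<d. (G i x0 * F j x0) $$ (0,0) = (if i = j then 1 else 0)"
    using sp unfolding splits_def by blast
  obtain f g where fg: "rhom m n S N T f" "rhom m n S T N g"
     "\<forall>x\<in>S. g x * f x = 1\<^sub>m (rdim N x) \<and> f x * g x = 1\<^sub>m (rdim T x) \<and> rdim N x = rdim T x"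
    using iso_homs[OF N T like] by blast
  note X = is_rep_bsum[OF N R]
  define a where "a = rdim N x0"
  define b where "b = rdim R x0"
  have a1: "a = 1" using fg(3) x0 T1 unfolding a_def by auto
  define F' where "F' = (\<lambda>j x. if j = 0 then inl (rdim N x) (rdim R x) * g x else inr (rdim N x) (rdim R x) * F (j - 1) x)"
  define G' where "G' = (\<lambda>i x. if i = 0 then f x * prl (rdim N x) (rdim R x) else G (i - 1) x * prr (rdim N x) (rdim R x))"
  show ?thesis unfolding splits_def
  proof (rule exI[of _ F'], rule exI[of _ G'], intro conjI allI impI)
    fix j assume j: "j < Suc d"
    show "rhom m n S T (bsum N R) (F' j)"
    proof (cases "j = 0")
      case True
      thus ?thesis unfolding F'_def using hom_comp[OF T N X fg(2) hom_inl[OF N R]] by simp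
    next
      case False
      hence "rhom m n S T R (F (j - 1))" using FG(1) j by auto
      thus ?thesis unfolding F'_def using False hom_comp[OF T R X _ hom_inr[OF N R]] by simp
    qed
  next
    fix i assume i: "i < Suc d"
    show "rhom m n S (bsum N R) T (G' i)"
    proof (cases "i = 0")
      case True
      thus ?thesis unfolding G'_def using hom_comp[OF X N T hom_prl[OF N R] fg(1)] by simp
    next
      case False
      hence "rhom m n S R T (G (i - 1))" using FG(2) i by auto
      thus ?thesis unfolding G'_def using False hom_comp[OF X R T hom_prr[OF N R]] by simp
    qed
  next
    fix i j assume ij: "i < Suc d" "j < Suc d"
    have cf: "f x0 \<in> carrier_mat 1 a" "g x0 \<in> carrier_mat a 1"
      using homD(1)[OF fg(1) x0] homD(1)[OF fg(2) x0] T1 unfolding a_def by auto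
    have fgx: "f x0 * g x0 = 1\<^sub>m 1" using fg(3) x0 T1 by auto
    have cF: "j \<noteq> 0 \<Longrightarrow> F (j-1) x0 \<in> carrier_mat b 1"
      using homD(1)[OF FG(1)[rule_format] x0, of "j-1"] ij T1 unfolding b_def by auto
    have cG: "i \<noteq> 0 \<Longrightarrow> G (i-1) x0 \<in> carrier_mat 1 b"
      using homD(1)[OF FG(2)[rule_format] x0, of "i-1"] ij T1 unfolding b_def by auto
    show "(G' i x0 * F' j x0) $$ (0,0) = (if i = j then 1 else 0)"
    proof (cases "i = 0")
      case True note i0 = this
      show ?thesis
      proof (cases "j = 0")
        case True
        have "f x0 * prl a b * (inl a b * g x0) = f x0 * (prl a b * inl a b) * g x0"
          by (rule mat_assoc4[OF cf(1) prl_carrier inl_carrier cf(2)])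
        also have "\<dots> = 1\<^sub>m 1" using cf fgx by (simp add: prl_inl)
        finally show ?thesis using i0 True unfolding F'_def G'_def a_def b_def by simp
      next
        case False
        have "f x0 * prl a b * (inr a b * F (j-1) x0) = f x0 * (prl a b * inr a b) * F (j-1) x0"
          by (rule mat_assoc4[OF cf(1) prl_carrier inr_carrier cF[OF False]])
        also have "\<dots> = 0\<^sub>m 1 1" using cf cF[OF False] by (simp add: prl_inr)
        finally show ?thesis using i0 False unfolding F'_def G'_def a_def b_def by simp
      qed
    next
      case False note i0 = this
      show ?thesis
      proof (cases "j = 0")
        case True
        have "G (i-1) x0 * prr a b * (inl a b * g x0) = G (i-1) x0 * (prr a b * inl a b) * g x0"
          by (rule mat_assoc4[OF cG[OF i0] prr_carrier inl_carrier cf(2)])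
        also have "\<dots> = 0\<^sub>m 1 1" using cG[OF i0] cf by (simp add: prr_inl)
        finally show ?thesis using i0 True unfolding F'_def G'_def a_def b_def by simp
      next
        case False
        have "G (i-1) x0 * prr a b * (inr a b * F (j-1) x0) = G (i-1) x0 * (prr a b * inr a b) * F (j-1) x0"
          by (rule mat_assoc4[OF cG[OF i0] prr_carrier inr_carrier cF[OF False]])
        also have "\<dots> = G (i-1) x0 * F (j-1) x0" using cG[OF i0] cF[OF False] by (simp add: prr_inr)
        finally have "(G' i x0 * F' j x0) = G (i-1) x0 * F (j-1) x0"
          using i0 False unfolding F'_def G'_def a_def b_def by simp
        moreover have "(G (i-1) x0 * F (j-1) x0) $$ (0,0) = (if i - 1 = j - 1 then 1 else 0)"
          using FG(3) ij i0 False by auto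
        ultimately show ?thesis using i0 False by auto
      qed
    qed
  qed
qed

lemma splits_dsum:
  assumes T: "is_rep m n S T" and x0: "x0 \<in> S" and T1: "rdim T x0 = 1" and Sg: "S \<subseteq> grid m n"
    and Ls: "\<forall>L\<in>set Ls. is_rep m n S L"
  shows "splits m n S T x0 (dsum Ls) (length (filter (\<lambda>N. iso_rep m n S N T) Ls))"
  using Ls
proof (induction Ls)
  case Nil
  show ?case unfolding splits_def by auto
next
  case (Cons N Ls)
  have N: "is_rep m n S N" and R: "is_rep m n S (dsum Ls)" using Cons.prems is_rep_dsum[OF Sg] by auto
  have IH: "splits m n S T x0 (dsum Ls) (length (filter (\<lambda>N. iso_rep m n S N T) Ls))" using Cons by auto
  show ?case
  proof (cases "iso_rep m n S N T")
    case True
    thus ?thesis unfolding dsum_Cons using splits_like[OF T N R x0 T1 True IH] by simp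
  next
    case False
    thus ?thesis unfolding dsum_Cons using splits_skip[OF T N R x0 IH] by simp
  qed
qed


lemma pair_decomp:
  assumes G: "G \<in> carrier_mat p (a+b)" and F: "(F :: 'a::field mat) \<in> carrier_mat (a+b) q"
  shows "G * F = (G * inl a b) * (prl a b * F) + (G * inr a b) * (prr a b * F)"
proof -
  have "G * F = G * (1\<^sub>m (a+b) * F)" using F by simp
  also have "\<dots> = G * ((inl a b * prl a b + inr a b * prr a b) * F)" by (simp add: inl_prl_inr_prr)
  also have "(inl a b * prl a b + inr a b * prr a b) * F = inl a b * prl a b * F + inr a b * prr a b * F"
    by (rule add_mult_distrib_mat[OF _ _ F]) auto
  also have "G * (inl a b * prl a b * F + inr a b * prr a b * F) = G * (inl a b * prl a b * F) + G * (inr a b * prr a b * F)"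
    by (rule mult_add_distrib_mat[OF G]) (use F in auto)
  also have "G * (inl a b * prl a b * F) = G * (inl a b * (prl a b * F))"
    using assoc_mult_mat[OF inl_carrier prl_carrier F] by simp
  also have "\<dots> = (G * inl a b) * (prl a b * F)" by (rule assoc_mult_mat[OF G inl_carrier mult_carrier_mat[OF prl_carrier F], symmetric])
  also have "G * (inr a b * prr a b * F) = G * (inr a b * (prr a b * F))"
    using assoc_mult_mat[OF inr_carrier prr_carrier F] by simp
  also have "\<dots> = (G * inr a b) * (prr a b * F)" by (rule assoc_mult_mat[OF G inr_carrier mult_carrier_mat[OF prr_carrier F], symmetric])
  finally show ?thesis .
qed

lemma mult_cons_index:
  assumes B: "B' \<in> carrier_mat d c" and A: "A' \<in> carrier_mat c e" and i: "i < d" and j: "j < e"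
  shows "(mat d (Suc c) (\<lambda>(i,k). if k = 0 then \<beta> i else B' $$ (i, k - 1)) *
          mat (Suc c) e (\<lambda>(k,j). if k = 0 then \<alpha> j else A' $$ (k - 1, j))) $$ (i,j)
        = \<beta> i * \<alpha> j + (B' * A') $$ (i,j)"
  using assms by (simp add: scalar_prod_def atLeast0LessThan sum.lessThan_Suc_shift del: sum.lessThan_Suc)

lemma pair_factor:
  assumes T: "is_rep m n S T" and x0: "x0 \<in> S" and T1: "rdim T x0 = 1" and Sg: "S \<subseteq> grid m n"
    and Ls: "\<forall>L\<in>set Ls. is_rep m n S L \<and> (iso_rep m n S L T \<or> null_rep m n S T x0 L)"
  shows "(\<forall>j<d. rhom m n S T (dsum Ls) (F j)) \<Longrightarrow> (\<forall>i<d. rhom m n S (dsum Ls) T (G i)) \<Longrightarrow>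
     \<exists>B A. B \<in> carrier_mat d (length (filter (\<lambda>N. iso_rep m n S N T) Ls)) \<and>
           A \<in> carrier_mat (length (filter (\<lambda>N. iso_rep m n S N T) Ls)) d \<and>
           (\<forall>i<d. \<forall>j<d. (G i x0 * F j x0) $$ (0,0) = (B * A) $$ (i,j))"
  using Ls
proof (induction Ls arbitrary: F G)
  case Nil
  show ?case
  proof (rule exI[of _ "0\<^sub>m d 0"], rule exI[of _ "0\<^sub>m 0 d"], intro conjI allI impI)
    fix i j assume ij: "i < d" "j < d"
    have "G i x0 \<in> carrier_mat 1 0" "F j x0 \<in> carrier_mat 0 1"
      using homD(1)[OF Nil(2)[rule_format, OF ij(1)] x0] homD(1)[OF Nil(1)[rule_format, OF ij(2)] x0] T1
      by (auto simp: dsum_def)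
    hence "(G i x0 * F j x0) $$ (0,0) = 0" by (intro mult_empty_index) auto
    moreover have "(0\<^sub>m d 0 * 0\<^sub>m 0 d :: 'a mat) $$ (i,j) = 0" using ij by (intro mult_empty_index) auto
    ultimately show "(G i x0 * F j x0) $$ (0,0) = (0\<^sub>m d 0 * 0\<^sub>m 0 d) $$ (i,j)" by simp
  qed auto
next
  case (Cons N Rs)
  have N: "is_rep m n S N" and Nc: "iso_rep m n S N T \<or> null_rep m n S T x0 N" using Cons.prems(3) by auto
  have Rsr: "\<forall>L\<in>set Rs. is_rep m n S L \<and> (iso_rep m n S L T \<or> null_rep m n S T x0 L)" using Cons.prems(3) by auto
  have R: "is_rep m n S (dsum Rs)" using Rsr is_rep_dsum[OF Sg] by auto
  note X = is_rep_bsum[OF N R]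
  let ?a = "\<lambda>x. rdim N x" and ?b = "\<lambda>x. rdim (dsum Rs) x"
  define FN where "FN = (\<lambda>j x. prl (?a x) (?b x) * F j x)"
  define FR where "FR = (\<lambda>j x. prr (?a x) (?b x) * F j x)"
  define GN where "GN = (\<lambda>i x. G i x * inl (?a x) (?b x))"
  define GR where "GR = (\<lambda>i x. G i x * inr (?a x) (?b x))"
  have hF: "\<forall>j<d. rhom m n S T (bsum N (dsum Rs)) (F j)" using Cons.prems(1) unfolding dsum_Cons .
  have hG: "\<forall>i<d. rhom m n S (bsum N (dsum Rs)) T (G i)" using Cons.prems(2) unfolding dsum_Cons .
  have hFN: "\<forall>j<d. rhom m n S T N (FN j)" unfolding FN_def using hom_comp[OF T X N _ hom_prl[OF N R]] hF by blast
  have hFR: "\<forall>j<d. rhom m n S T (dsum Rs) (FR j)" unfolding FR_def using hom_comp[OF T X R _ hom_prr[OF N R]] hF by blast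
  have hGN: "\<forall>i<d. rhom m n S N T (GN i)" unfolding GN_def using hom_comp[OF N X T hom_inl[OF N R]] hG by blast
  have hGR: "\<forall>i<d. rhom m n S (dsum Rs) T (GR i)" unfolding GR_def using hom_comp[OF R X T hom_inr[OF N R]] hG by blast
  obtain B' A' where BA': "B' \<in> carrier_mat d (length (filter (\<lambda>N. iso_rep m n S N T) Rs))"
    "A' \<in> carrier_mat (length (filter (\<lambda>N. iso_rep m n S N T) Rs)) d"
    "\<forall>i<d. \<forall>j<d. (GR i x0 * FR j x0) $$ (0,0) = (B' * A') $$ (i,j)"
    using Cons.IH[OF hFR hGR Rsr] by blast
  have dec: "\<And>i j. i < d \<Longrightarrow> j < d \<Longrightarrow> (G i x0 * F j x0) $$ (0,0) = (GN i x0 * FN j x0) $$ (0,0) + (GR i x0 * FR j x0) $$ (0,0)"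
  proof -
    fix i j assume ij: "i < d" "j < d"
    have cG: "G i x0 \<in> carrier_mat 1 (?a x0 + ?b x0)" using homD(1)[OF hG[rule_format, OF ij(1)] x0] T1 by simp
    have cF: "F j x0 \<in> carrier_mat (?a x0 + ?b x0) 1" using homD(1)[OF hF[rule_format, OF ij(2)] x0] T1 by simp
    have "G i x0 * F j x0 = GN i x0 * FN j x0 + GR i x0 * FR j x0"
      unfolding GN_def FN_def GR_def FR_def by (rule pair_decomp[OF cG cF])
    thus "(G i x0 * F j x0) $$ (0,0) = (GN i x0 * FN j x0) $$ (0,0) + (GR i x0 * FR j x0) $$ (0,0)"
      using cG cF by (simp add: GN_def FN_def GR_def FR_def)
  qed
  show ?case
  proof (cases "iso_rep m n S N T")
    case True
    obtain f g where fg: "rhom m n S N T f" "rhom m n S T N g"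
       "\<forall>x\<in>S. g x * f x = 1\<^sub>m (rdim N x) \<and> f x * g x = 1\<^sub>m (rdim T x) \<and> rdim N x = rdim T x"
      using iso_homs[OF N T True] by blast
    have a1: "?a x0 = 1" using fg(3) x0 T1 by auto
    define \<beta> where "\<beta> = (\<lambda>i. (GN i x0 * g x0) $$ (0,0))"
    define \<alpha> where "\<alpha> = (\<lambda>j. (f x0 * FN j x0) $$ (0,0))"
    let ?c = "length (filter (\<lambda>N. iso_rep m n S N T) Rs)"
    show ?thesis
    proof (rule exI[of _ "mat d (Suc ?c) (\<lambda>(i,k). if k = 0 then \<beta> i else B' $$ (i, k - 1))"], rule exI[of _ "mat (Suc ?c) d (\<lambda>(k,j). if k = 0 then \<alpha> j else A' $$ (k - 1, j))"], intro conjI allI impI)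
      fix i j assume ij: "i < d" "j < d"
      have cGN: "GN i x0 \<in> carrier_mat 1 1" using homD(1)[OF hGN[rule_format, OF ij(1)] x0] T1 a1 by simp
      have cFN: "FN j x0 \<in> carrier_mat 1 1" using homD(1)[OF hFN[rule_format, OF ij(2)] x0] T1 a1 by simp
      have cf: "f x0 \<in> carrier_mat 1 1" "g x0 \<in> carrier_mat 1 1" using homD(1)[OF fg(1) x0] homD(1)[OF fg(2) x0] T1 a1 by auto
      have gf: "g x0 * f x0 = 1\<^sub>m 1" using fg(3) x0 a1 by auto
      have "GN i x0 * FN j x0 = GN i x0 * (g x0 * f x0) * FN j x0" using gf cGN cFN by simp
      also have "\<dots> = (GN i x0 * g x0) * (f x0 * FN j x0)" by (rule mat_assoc4[OF cGN cf(2) cf(1) cFN, symmetric])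
      finally have "(GN i x0 * FN j x0) $$ (0,0) = \<beta> i * \<alpha> j"
        unfolding \<alpha>_def \<beta>_def using mult_11_index cGN cFN cf by (metis mult_carrier_mat)
      thus "(G i x0 * F j x0) $$ (0,0) = (mat d (Suc ?c) (\<lambda>(i,k). if k = 0 then \<beta> i else B' $$ (i, k - 1)) *
          mat (Suc ?c) d (\<lambda>(k,j). if k = 0 then \<alpha> j else A' $$ (k - 1, j))) $$ (i,j)"
        using dec[OF ij] BA'(3) ij mult_cons_index[OF BA'(1,2) ij] by simp
    qed (use True in auto)
  next
    case False
    hence nl: "null_rep m n S T x0 N" using Nc by simp
    show ?thesis
    proof (rule exI[of _ B'], rule exI[of _ A'], intro conjI allI impI)
      fix i j assume ij: "i < d" "j < d"
      have "(GN i x0 * FN j x0) $$ (0,0) = 0" using nl hFN hGN ij unfolding null_rep_def by blast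
      thus "(G i x0 * F j x0) $$ (0,0) = (B' * A') $$ (i,j)" using dec[OF ij] BA'(3) ij by simp
    qed (use False BA' in auto)
  qed
qed

lemma splits_upper:
  assumes T: "is_rep m n S T" and x0: "x0 \<in> S" and T1: "rdim T x0 = 1" and Sg: "S \<subseteq> grid m n"
    and Ls: "\<forall>L\<in>set Ls. is_rep m n S L \<and> (iso_rep m n S L T \<or> null_rep m n S T x0 L)"
    and sp: "splits m n S T x0 (dsum Ls) d"
  shows "d \<le> length (filter (\<lambda>N. iso_rep m n S N T) Ls)"
proof -
  obtain F G where FG: "\<forall>j<d. rhom m n S T (dsum Ls) (F j)" "\<forall>i<d. rhom m n S (dsum Ls) T (G i)"
    "\<forall>i<d. \<forall>j<d. (G i x0 * F j x0) $$ (0,0) = (if i = j then 1 else 0)"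
    using sp unfolding splits_def by blast
  obtain B A where BA: "B \<in> carrier_mat d (length (filter (\<lambda>N. iso_rep m n S N T) Ls))"
    "A \<in> carrier_mat (length (filter (\<lambda>N. iso_rep m n S N T) Ls)) d"
    "\<forall>i<d. \<forall>j<d. (G i x0 * F j x0) $$ (0,0) = (B * A) $$ (i,j)"
    using pair_factor[OF T x0 T1 Sg Ls FG(1,2)] by blast
  have "B * A = 1\<^sub>m d"
  proof (rule eq_matI)
    fix i j assume "i < dim_row (1\<^sub>m d :: 'a mat)" "j < dim_col (1\<^sub>m d :: 'a mat)"
    thus "(B * A) $$ (i,j) = 1\<^sub>m d $$ (i,j)" using BA(3) FG(3) by simp
  qed (use BA in auto)
  thus ?thesis by (rule dim_le_of_factor[OF BA(1,2)])
qed




definition e0c :: "nat \<Rightarrow> 'a::field mat" where "e0c r = mat r 1 (\<lambda>(i,j). if i = 0 then 1 else 0)"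
definition e0r :: "nat \<Rightarrow> 'a::field mat" where "e0r r = mat 1 r (\<lambda>(i,j). if j = 0 then 1 else 0)"

lemma e0c_carrier[simp]: "e0c r \<in> carrier_mat r 1" by (simp add: e0c_def)
lemma e0r_carrier[simp]: "e0r r \<in> carrier_mat 1 r" by (simp add: e0r_def)
lemma e0_dims[simp]: "dim_row (e0c r) = r" "dim_col (e0c r) = 1" "dim_row (e0r r) = 1" "dim_col (e0r r) = r"
  by (auto simp: e0c_def e0r_def)

lemma col_e0c: "0 < r \<Longrightarrow> col (e0c r) 0 = unit_vec r 0"
  by (intro eq_vecI) (auto simp: e0c_def unit_vec_def)
lemma row_e0r: "0 < r \<Longrightarrow> row (e0r r) 0 = unit_vec r 0"
  by (intro eq_vecI) (auto simp: e0r_def unit_vec_def)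

lemma mult_e0c_index: "X \<in> carrier_mat p q \<Longrightarrow> 0 < q \<Longrightarrow> i < p \<Longrightarrow> (X * e0c q) $$ (i,0) = X $$ (i,0)"
  by (simp add: col_e0c)
lemma e0r_mult_index: "X \<in> carrier_mat p q \<Longrightarrow> 0 < p \<Longrightarrow> j < q \<Longrightarrow> (e0r p * X) $$ (0,j) = X $$ (0,j)"
  by (simp add: row_e0r)

lemma pivot_exists:
  fixes F G :: "'a::field mat"
  assumes F: "F \<in> carrier_mat r 1" and G: "G \<in> carrier_mat 1 r" and GF: "G * F = 1\<^sub>m 1"
  shows "\<exists>P Pi. P \<in> carrier_mat r r \<and> Pi \<in> carrier_mat r r \<and> P * Pi = 1\<^sub>m r \<and> Pi * P = 1\<^sub>m r \<and>
     P * F = e0c r \<and> G * Pi = e0r r \<and> Pi * e0c r = F"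
proof -
  define w where "w = (\<lambda>j. G $$ (0,j))"
  define v where "v = (\<lambda>j. F $$ (j,0))"
  have s1: "(\<Sum>j<r. w j * v j) = 1"
  proof -
    have "(G * F) $$ (0,0) = 1" using GF by simp
    moreover have "(G * F) $$ (0,0) = (\<Sum>j<r. w j * v j)"
      using F G by (simp add: scalar_prod_def w_def v_def atLeast0LessThan)
    ultimately show ?thesis by simp
  qed
  obtain k where k: "k < r" "w k \<noteq> 0"
  proof -
    have "\<exists>k<r. w k \<noteq> 0"
    proof (rule ccontr)
      assume "\<not> ?thesis"
      hence "(\<Sum>j<r. w j * v j) = 0" by simp
      thus False using s1 by simp
    qed
    thus ?thesis using that by blast
  qed
  have r0: "0 < r" using k by simp
  define \<sigma> where "\<sigma> = (\<lambda>i::nat. if i = k then 0 else i)"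
  have \<sigma>r: "\<And>i. i < r \<Longrightarrow> \<sigma> i < r" using r0 unfolding \<sigma>_def by auto
  define P where "P = mat r r (\<lambda>(i,j). if i = 0 then w j else (if \<sigma> i = j then 1 else 0) - w j * v (\<sigma> i))"
  have Pc: "P \<in> carrier_mat r r" unfolding P_def by simp
  have PF: "P * F = e0c r"
  proof (rule eq_matI)
    fix i j assume ij: "i < dim_row (e0c r :: 'a mat)" "j < dim_col (e0c r :: 'a mat)"
    hence i: "i < r" and j0: "j = 0" by auto
    have "(P * F) $$ (i,0) = (\<Sum>l<r. P $$ (i,l) * v l)"
      using Pc F i by (simp add: scalar_prod_def v_def atLeast0LessThan)
    also have "\<dots> = (if i = 0 then 1 else 0)"
    proof (cases "i = 0")
      case True
      thus ?thesis using s1 i by (simp add: P_def)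
    next
      case False
      have "(\<Sum>l<r. P $$ (i,l) * v l) = (\<Sum>l<r. (if \<sigma> i = l then v l else 0) - v (\<sigma> i) * (w l * v l))"
        using False i by (intro sum.cong) (auto simp: P_def algebra_simps)
      also have "\<dots> = (\<Sum>l<r. (if \<sigma> i = l then v l else 0)) - v (\<sigma> i) * (\<Sum>l<r. w l * v l)"
        by (simp add: sum_subtractf sum_distrib_left)
      also have "\<dots> = 0" using s1 \<sigma>r[OF i] by simp
      finally show ?thesis using False by simp
    qed
    finally show "(P * F) $$ (i,j) = e0c r $$ (i,j)" using i j0 by (simp add: e0c_def)
  qed (use Pc F in auto)
  have e0P: "e0r r * P = G"
  proof (rule eq_matI)
    fix i j assume ij: "i < dim_row G" "j < dim_col G"
    hence i0: "i = 0" and j: "j < r" using G by auto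
    show "(e0r r * P) $$ (i,j) = G $$ (i,j)" using e0r_mult_index[OF Pc r0 j] i0 j by (simp add: P_def w_def)
  qed (use Pc G in auto)
  have "det P \<noteq> 0"
  proof
    assume "det P = 0"
    then obtain u where u: "u \<in> carrier_vec r" "u \<noteq> 0\<^sub>v r" "P *\<^sub>v u = 0\<^sub>v r"
      using det_0_iff_vec_prod_zero_field[OF Pc] by blast
    define s where "s = (\<Sum>l<r. w l * u $ l)"
    have Pu: "\<And>i. i < r \<Longrightarrow> (P *\<^sub>v u) $ i = (\<Sum>l<r. P $$ (i,l) * u $ l)"
      using Pc u(1) by (simp add: scalar_prod_def atLeast0LessThan)
    have s0: "s = 0"
    proof -
      have "(P *\<^sub>v u) $ 0 = s" using Pu[OF r0] by (simp add: P_def s_def)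
      thus ?thesis using u(3) r0 by simp
    qed
    have usig: "\<And>i. i < r \<Longrightarrow> i \<noteq> 0 \<Longrightarrow> u $ (\<sigma> i) = 0"
    proof -
      fix i assume i: "i < r" "i \<noteq> 0"
      have "(P *\<^sub>v u) $ i = (\<Sum>l<r. (if \<sigma> i = l then u $ l else 0) - v (\<sigma> i) * (w l * u $ l))"
        unfolding Pu[OF i(1)] using i by (intro sum.cong) (auto simp: P_def algebra_simps)
      also have "\<dots> = (\<Sum>l<r. (if \<sigma> i = l then u $ l else 0)) - v (\<sigma> i) * s"
        by (simp add: sum_subtractf sum_distrib_left s_def)
      also have "\<dots> = u $ (\<sigma> i)" using s0 \<sigma>r[OF i(1)] by simp
      finally show "u $ (\<sigma> i) = 0" using u(3) i by simp
    qed
    have uj: "\<And>j. j < r \<Longrightarrow> j \<noteq> k \<Longrightarrow> u $ j = 0"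
    proof -
      fix j assume j: "j < r" "j \<noteq> k"
      show "u $ j = 0"
      proof (cases "j = 0")
        case True
        hence "k \<noteq> 0" using j by simp
        thus ?thesis using usig[OF k(1)] True by (simp add: \<sigma>_def)
      next
        case False
        thus ?thesis using usig[OF j(1) False] j by (simp add: \<sigma>_def)
      qed
    qed
    have "s = w k * u $ k"
    proof -
      have "s = (\<Sum>l<r. if l = k then w k * u $ k else 0)"
        unfolding s_def by (intro sum.cong) (auto simp: uj)
      thus ?thesis using k by simp
    qed
    hence uk: "u $ k = 0" using s0 k by simp
    have "u = 0\<^sub>v r"
      by (rule eq_vecI) (use u(1) uj uk in auto)
    thus False using u(2) by simp
  qed
  from det_non_zero_imp_unit[OF Pc this, of "()"]
  obtain Pi where Pi: "Pi \<in> carrier_mat r r" "Pi * P = 1\<^sub>m r" "P * Pi = 1\<^sub>m r"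
    unfolding Units_def by (auto simp: ring_mat_simps)
  have GPi: "G * Pi = e0r r"
  proof -
    have "G * Pi = e0r r * P * Pi" using e0P by simp
    also have "\<dots> = e0r r * (P * Pi)" by (rule assoc_mult_mat[OF e0r_carrier Pc Pi(1)])
    also have "\<dots> = e0r r" using Pi(3) by simp
    finally show ?thesis .
  qed
  have PiE: "Pi * e0c r = F"
  proof -
    have "Pi * e0c r = Pi * (P * F)" using PF by simp
    also have "\<dots> = (Pi * P) * F" by (rule assoc_mult_mat[OF Pi(1) Pc F, symmetric])
    also have "\<dots> = F" using Pi(2) F by simp
    finally show ?thesis .
  qed
  show ?thesis using Pc Pi PF GPi PiE by blast
qed


lemma zero_by_dims: "A \<in> carrier_mat p 0 \<Longrightarrow> B \<in> carrier_mat 0 q \<Longrightarrow> (A * B :: 'a::field mat) = 0\<^sub>m p q"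
  by (intro eq_matI) (auto simp: scalar_prod_def)

lemma split_off:
  fixes N :: "'a::field rep"
  assumes Sg: "S \<subseteq> grid m n" and N: "is_rep m n S N" and T: "is_rep m n S (intv_rep I :: 'a rep)"
    and F: "rhom m n S (intv_rep I) N F" and G: "rhom m n S N (intv_rep I) G"
    and GF: "\<forall>x\<in>S \<inter> I. G x * F x = 1\<^sub>m 1"
    and indec: "\<not> (\<exists>Q. is_rep m n S Q \<and> nonzero_rep S Q \<and> iso_rep m n S N (bsum (intv_rep I) Q))"
  shows "iso_rep m n S N (intv_rep I)"
proof -
  let ?T = "intv_rep I :: 'a rep"
  define r where "r = (\<lambda>x. rdim N x)"
  define ov where "ov = (\<lambda>x. if x \<in> I then 1 else (0::nat))"
  have Fc: "\<And>x. x \<in> S \<Longrightarrow> F x \<in> carrier_mat (r x) (ov x)" using homD(1)[OF F] unfolding r_def ov_def by simp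
  have Gc: "\<And>x. x \<in> S \<Longrightarrow> G x \<in> carrier_mat (ov x) (r x)" using homD(1)[OF G] unfolding r_def ov_def by simp
  have Tin: "\<And>x y. x \<in> I \<Longrightarrow> y \<in> I \<Longrightarrow> rmap ?T x y = 1\<^sub>m 1" by (rule rmap_intv_in)
  have Tc: "\<And>x y. rmap ?T x y \<in> carrier_mat (ov y) (ov x)" using rmap_intv_carrier unfolding ov_def by blast
  have ro: "\<And>x. x \<in> S \<Longrightarrow> ov x \<le> r x"
  proof -
    fix x assume x: "x \<in> S"
    show "ov x \<le> r x"
    proof (cases "x \<in> I")
      case True
      have "G x * F x = 1\<^sub>m 1" using GF x True by auto
      moreover have "r x = 0 \<Longrightarrow> (G x * F x) $$ (0,0) = 0"
        using Fc[OF x] Gc[OF x] True unfolding ov_def by (intro mult_empty_index) auto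
      ultimately show ?thesis using True unfolding ov_def by fastforce
    qed (simp add: ov_def)
  qed
  define props where "props = (\<lambda>x (P :: 'a mat) (Pi :: 'a mat). P \<in> carrier_mat (r x) (r x) \<and> Pi \<in> carrier_mat (r x) (r x) \<and>
      P * Pi = 1\<^sub>m (r x) \<and> Pi * P = 1\<^sub>m (r x) \<and>
      (x \<in> I \<longrightarrow> P * F x = e0c (r x) \<and> G x * Pi = e0r (r x) \<and> Pi * e0c (r x) = F x))"
  have "\<forall>x\<in>S. \<exists>PP. props x (fst PP) (snd PP)"
  proof
    fix x assume x: "x \<in> S"
    show "\<exists>PP. props x (fst PP) (snd PP)"
    proof (cases "x \<in> I")
      case True
      have "F x \<in> carrier_mat (r x) 1" "G x \<in> carrier_mat 1 (r x)" "G x * F x = 1\<^sub>m 1"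
        using Fc[OF x] Gc[OF x] GF x True unfolding ov_def by auto
      from pivot_exists[OF this] obtain P Pi where "P \<in> carrier_mat (r x) (r x) \<and> Pi \<in> carrier_mat (r x) (r x) \<and> P * Pi = 1\<^sub>m (r x) \<and> Pi * P = 1\<^sub>m (r x) \<and>
        P * F x = e0c (r x) \<and> G x * Pi = e0r (r x) \<and> Pi * e0c (r x) = F x" by blast
      thus ?thesis unfolding props_def by (intro exI[of _ "(P,Pi)"]) simp
    next
      case False
      thus ?thesis unfolding props_def by (intro exI[of _ "(1\<^sub>m (r x), 1\<^sub>m (r x))"]) simp
    qed
  qed
  then obtain PP where PP: "\<forall>x\<in>S. props x (fst (PP x)) (snd (PP x))" by (rule bchoice[elim_format]) blast
  define P where "P = (\<lambda>x. fst (PP x))"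
  define Pi where "Pi = (\<lambda>x. snd (PP x))"
  have Pc: "\<And>x. x \<in> S \<Longrightarrow> P x \<in> carrier_mat (r x) (r x)" and Pic: "\<And>x. x \<in> S \<Longrightarrow> Pi x \<in> carrier_mat (r x) (r x)"
    and PPi: "\<And>x. x \<in> S \<Longrightarrow> P x * Pi x = 1\<^sub>m (r x)" and PiP: "\<And>x. x \<in> S \<Longrightarrow> Pi x * P x = 1\<^sub>m (r x)"
    and PF: "\<And>x. x \<in> S \<Longrightarrow> x \<in> I \<Longrightarrow> P x * F x = e0c (r x)"
    and GPi: "\<And>x. x \<in> S \<Longrightarrow> x \<in> I \<Longrightarrow> G x * Pi x = e0r (r x)"
    and PiE: "\<And>x. x \<in> S \<Longrightarrow> x \<in> I \<Longrightarrow> Pi x * e0c (r x) = F x"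
    using PP unfolding props_def P_def Pi_def by auto
  define R where "R = rmap N"
  have Rc: "\<And>x y. x \<in> S \<Longrightarrow> y \<in> S \<Longrightarrow> leq m n x y \<Longrightarrow> R x y \<in> carrier_mat (r y) (r x)"
    unfolding R_def r_def by (rule rep_carrier[OF N])
  define X where "X = (\<lambda>x y. P y * R x y * Pi x)"
  have Xc: "\<And>x y. x \<in> S \<Longrightarrow> y \<in> S \<Longrightarrow> leq m n x y \<Longrightarrow> X x y \<in> carrier_mat (r y) (r x)"
    unfolding X_def using Pc Rc Pic by (meson mult_carrier_mat)
  define Q where "Q = (\<lparr>rdim = (\<lambda>x. r x - ov x), rmap = (\<lambda>x y. mat (r y - ov y) (r x - ov x) (\<lambda>(i,j). X x y $$ (i + ov y, j + ov x)))\<rparr> :: 'a rep)"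
  have colX: "\<And>x y i. x \<in> S \<Longrightarrow> y \<in> S \<Longrightarrow> leq m n x y \<Longrightarrow> x \<in> I \<Longrightarrow> i < r y \<Longrightarrow>
     X x y $$ (i,0) = (if y \<in> I \<and> i = 0 then 1 else 0)"
  proof -
    fix x y i assume xy: "x \<in> S" "y \<in> S" "leq m n x y" and xI: "x \<in> I" and i: "i < r y"
    have rx: "0 < r x" using ro[OF xy(1)] xI unfolding ov_def by simp
    have hF: "F y * rmap ?T x y = R x y * F x" using homD(2)[OF F xy] unfolding R_def .
    have "X x y * e0c (r x) = P y * R x y * (Pi x * e0c (r x))"
      unfolding X_def by (rule assoc_mult_mat[OF mult_carrier_mat[OF Pc[OF xy(2)] Rc[OF xy]] Pic[OF xy(1)] e0c_carrier])
    also have "\<dots> = P y * (R x y * F x)" unfolding PiE[OF xy(1) xI]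
      by (rule assoc_mult_mat[OF Pc[OF xy(2)] Rc[OF xy] Fc[OF xy(1)]]) 
    also have "\<dots> = P y * (F y * rmap ?T x y)" using hF by simp
    finally have e: "X x y * e0c (r x) = P y * (F y * rmap ?T x y)" .
    have "(X x y * e0c (r x)) $$ (i,0) = X x y $$ (i,0)" by (rule mult_e0c_index[OF Xc[OF xy] rx i])
    show "X x y $$ (i,0) = (if y \<in> I \<and> i = 0 then 1 else 0)"
    proof (cases "y \<in> I")
      case True
      have "F y * rmap ?T x y = F y" unfolding Tin[OF xI True] using Fc[OF xy(2)] True unfolding ov_def by simp
      hence "X x y * e0c (r x) = e0c (r y)" using e PF[OF xy(2) True] by simp
      thus ?thesis using \<open>(X x y * e0c (r x)) $$ (i,0) = X x y $$ (i,0)\<close> i True by (simp add: e0c_def)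
    next
      case False
      have "F y * rmap ?T x y = 0\<^sub>m (r y) 1"
        by (rule zero_by_dims) (use Fc[OF xy(2)] Tc[of x y] False xI in \<open>auto simp: ov_def\<close>)
      hence "X x y * e0c (r x) = 0\<^sub>m (r y) 1" using e Pc[OF xy(2)] by simp
      thus ?thesis using \<open>(X x y * e0c (r x)) $$ (i,0) = X x y $$ (i,0)\<close> i False by simp
    qed
  qed
  have rowX: "\<And>x y j. x \<in> S \<Longrightarrow> y \<in> S \<Longrightarrow> leq m n x y \<Longrightarrow> y \<in> I \<Longrightarrow> j < r x \<Longrightarrow>
     X x y $$ (0,j) = (if x \<in> I \<and> j = 0 then 1 else 0)"
  proof -
    fix x y j assume xy: "x \<in> S" "y \<in> S" "leq m n x y" and yI: "y \<in> I" and j: "j < r x"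
    have ry: "0 < r y" using ro[OF xy(2)] yI unfolding ov_def by simp
    have hG: "G y * R x y = rmap ?T x y * G x" using homD(2)[OF G xy] unfolding R_def .
    have eP: "e0r (r y) * P y = G y"
    proof -
      have "e0r (r y) * P y = G y * Pi y * P y" using GPi[OF xy(2) yI] by simp
      also have "\<dots> = G y * (Pi y * P y)" by (rule assoc_mult_mat[OF Gc[OF xy(2)] Pic[OF xy(2)] Pc[OF xy(2)]])
      also have "\<dots> = G y" using PiP[OF xy(2)] Gc[OF xy(2)] by simp
      finally show ?thesis .
    qed
    have "e0r (r y) * X x y = e0r (r y) * (P y * (R x y * Pi x))"
      unfolding X_def using assoc_mult_mat[OF Pc[OF xy(2)] Rc[OF xy] Pic[OF xy(1)]] by simp
    also have "\<dots> = (e0r (r y) * P y) * (R x y * Pi x)"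
      by (rule assoc_mult_mat[OF e0r_carrier Pc[OF xy(2)] mult_carrier_mat[OF Rc[OF xy] Pic[OF xy(1)]], symmetric])
    also have "\<dots> = (G y * R x y) * Pi x" unfolding eP
      by (rule assoc_mult_mat[OF Gc[OF xy(2)] Rc[OF xy] Pic[OF xy(1)], symmetric])
    also have "\<dots> = rmap ?T x y * (G x * Pi x)" unfolding hG
      by (rule assoc_mult_mat[OF Tc Gc[OF xy(1)] Pic[OF xy(1)]])
    finally have e: "e0r (r y) * X x y = rmap ?T x y * (G x * Pi x)" .
    have ee: "(e0r (r y) * X x y) $$ (0,j) = X x y $$ (0,j)" by (rule e0r_mult_index[OF Xc[OF xy] ry j])
    show "X x y $$ (0,j) = (if x \<in> I \<and> j = 0 then 1 else 0)"
    proof (cases "x \<in> I")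
      case True
      have "e0r (r y) * X x y = e0r (r x)" using e GPi[OF xy(1) True] Tin[OF True yI] by simp
      thus ?thesis using ee j True by (simp add: e0r_def)
    next
      case False
      have "rmap ?T x y * G x = 0\<^sub>m 1 (r x)"
        by (rule zero_by_dims) (use Gc[OF xy(1)] Tc[of x y] False yI in \<open>auto simp: ov_def\<close>)
      have "rmap ?T x y * (G x * Pi x) = (rmap ?T x y * G x) * Pi x"
        by (rule assoc_mult_mat[OF Tc Gc[OF xy(1)] Pic[OF xy(1)], symmetric])
      also have "\<dots> = 0\<^sub>m 1 (r x)" unfolding \<open>rmap ?T x y * G x = 0\<^sub>m 1 (r x)\<close> using Pic[OF xy(1)] by simp
      finally have "e0r (r y) * X x y = 0\<^sub>m 1 (r x)" using e by simp
      thus ?thesis using ee j False by simp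
    qed
  qed
  have Qc: "\<And>x y. rmap Q x y \<in> carrier_mat (r y - ov y) (r x - ov x)" unfolding Q_def by simp
  have blockX: "\<And>x y. x \<in> S \<Longrightarrow> y \<in> S \<Longrightarrow> leq m n x y \<Longrightarrow>
     X x y = four_block_mat (rmap ?T x y) (0\<^sub>m (ov y) (r x - ov x)) (0\<^sub>m (r y - ov y) (ov x)) (rmap Q x y)"
  proof -
    fix x y assume xy: "x \<in> S" "y \<in> S" "leq m n x y"
    have oy: "ov y + (r y - ov y) = r y" and ox: "ov x + (r x - ov x) = r x" using ro xy by auto
    show "X x y = four_block_mat (rmap ?T x y) (0\<^sub>m (ov y) (r x - ov x)) (0\<^sub>m (r y - ov y) (ov x)) (rmap Q x y)"
    proof (rule eq_matI)
      fix i j assume ij: "i < dim_row (four_block_mat (rmap ?T x y) (0\<^sub>m (ov y) (r x - ov x)) (0\<^sub>m (r y - ov y) (ov x)) (rmap Q x y))"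
        "j < dim_col (four_block_mat (rmap ?T x y) (0\<^sub>m (ov y) (r x - ov x)) (0\<^sub>m (r y - ov y) (ov x)) (rmap Q x y))"
      hence i: "i < r y" and j: "j < r x" using Tc[of x y] Qc[of x y] oy ox by auto
      have idx: "four_block_mat (rmap ?T x y) (0\<^sub>m (ov y) (r x - ov x)) (0\<^sub>m (r y - ov y) (ov x)) (rmap Q x y) $$ (i,j) =
        (if i < ov y then if j < ov x then rmap ?T x y $$ (i,j) else 0 else if j < ov x then 0 else rmap Q x y $$ (i - ov y, j - ov x))"
        using Tc[of x y] Qc[of x y] i j oy ox by (subst index_mat_four_block) auto
      show "X x y $$ (i,j) = four_block_mat (rmap ?T x y) (0\<^sub>m (ov y) (r x - ov x)) (0\<^sub>m (r y - ov y) (ov x)) (rmap Q x y) $$ (i,j)"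
        unfolding idx
      proof (cases "i < ov y")
        case True
        hence yI: "y \<in> I" and i0: "i = 0" unfolding ov_def by (auto split: if_splits)
        show "X x y $$ (i,j) = (if i < ov y then if j < ov x then rmap ?T x y $$ (i,j) else 0 else if j < ov x then 0 else rmap Q x y $$ (i - ov y, j - ov x))"
          using rowX[OF xy yI j] True i0 Tin[of x y] yI by (auto simp: ov_def)
      next
        case False
        show "X x y $$ (i,j) = (if i < ov y then if j < ov x then rmap ?T x y $$ (i,j) else 0 else if j < ov x then 0 else rmap Q x y $$ (i - ov y, j - ov x))"
        proof (cases "j < ov x")
          case True
          hence xI: "x \<in> I" and j0: "j = 0" unfolding ov_def by (auto split: if_splits)
          show ?thesis using colX[OF xy xI i] False True j0 by (auto simp: ov_def)
        next
          case False
          have "rmap Q x y $$ (i - ov y, j - ov x) = X x y $$ (i - ov y + ov y, j - ov x + ov x)"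
            unfolding Q_def using i j \<open>\<not> i < ov y\<close> False by simp
          thus ?thesis using \<open>\<not> i < ov y\<close> False by simp
        qed
      qed
    qed (use Tc[of x y] Qc[of x y] oy ox Xc[OF xy] in auto)
  qed
  have bsumX: "\<And>x y. rmap (bsum ?T Q) x y = four_block_mat (rmap ?T x y) (0\<^sub>m (ov y) (r x - ov x)) (0\<^sub>m (r y - ov y) (ov x)) (rmap Q x y)"
  proof -
    fix x y
    have "dim_row (rmap ?T x y) = ov y" "dim_col (rmap ?T x y) = ov x" using Tc[of x y] by auto
    moreover have "dim_row (rmap Q x y) = r y - ov y" "dim_col (rmap Q x y) = r x - ov x" using Qc[of x y] by auto
    ultimately show "rmap (bsum ?T Q) x y = four_block_mat (rmap ?T x y) (0\<^sub>m (ov y) (r x - ov x)) (0\<^sub>m (r y - ov y) (ov x)) (rmap Q x y)"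
      unfolding bsum_def by simp
  qed
  have Tid: "\<And>x. x \<in> S \<Longrightarrow> rmap ?T x x = 1\<^sub>m (ov x)" using rep_id[OF T] unfolding ov_def by simp
  have Tcomp: "\<And>x y z. x \<in> S \<Longrightarrow> y \<in> S \<Longrightarrow> z \<in> S \<Longrightarrow> leq m n x y \<Longrightarrow> leq m n y z \<Longrightarrow> rmap ?T y z * rmap ?T x y = rmap ?T x z"
    using rep_comp[OF T] by blast
  have Qrep: "is_rep m n S Q"
    unfolding is_rep_def
  proof (intro conjI ballI impI)
    show "S \<subseteq> grid m n" by (rule Sg)
  next
    fix x y assume "x \<in> S" "y \<in> S" "leq m n x y"
    show "rmap Q x y \<in> carrier_mat (rdim Q y) (rdim Q x)" using Qc unfolding Q_def by simp
  next
    fix x assume x: "x \<in> S"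
    have g: "x \<in> grid m n" using x Sg by auto
    have l: "leq m n x x" by (rule leq_refl[OF g])
    have ox: "ov x + (r x - ov x) = r x" using ro x by auto
    have "X x x = P x * 1\<^sub>m (r x) * Pi x" unfolding X_def R_def r_def using rep_id[OF N x] by simp
    also have "\<dots> = 1\<^sub>m (r x)" using Pc[OF x] PPi[OF x] by simp
    also have "\<dots> = four_block_mat (1\<^sub>m (ov x)) (0\<^sub>m (ov x) (r x - ov x)) (0\<^sub>m (r x - ov x) (ov x)) (1\<^sub>m (r x - ov x))"
      using four_block_one_mat[of "ov x" "r x - ov x"] ox by simp
    finally have "four_block_mat (rmap ?T x x) (0\<^sub>m (ov x) (r x - ov x)) (0\<^sub>m (r x - ov x) (ov x)) (rmap Q x x) =
      four_block_mat (1\<^sub>m (ov x)) (0\<^sub>m (ov x) (r x - ov x)) (0\<^sub>m (r x - ov x) (ov x)) (1\<^sub>m (r x - ov x))"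
      using blockX[OF x x l] by simp
    from fb_inj[OF this Tc one_carrier_mat Qc one_carrier_mat] 
    show "rmap Q x x = 1\<^sub>m (rdim Q x)" unfolding Q_def by simp
  next
    fix x y z assume xyz: "x \<in> S" "y \<in> S" "z \<in> S" "leq m n x y" "leq m n y z"
    have xz: "leq m n x z" using leq_trans xyz by blast
    note R1 = Rc[OF xyz(1,2,4)] and R2 = Rc[OF xyz(2,3,5)] and R3 = Rc[OF xyz(1,3) xz]
    have Rcomp: "R y z * R x y = R x z" unfolding R_def by (rule rep_comp[OF N xyz])
    have "X y z * X x y = (P z * R y z) * (Pi y * (P y * R x y * Pi x))"
      unfolding X_def by (rule assoc_mult_mat[OF mult_carrier_mat[OF Pc[OF xyz(3)] R2] Pic[OF xyz(2)] mult_carrier_mat[OF mult_carrier_mat[OF Pc[OF xyz(2)] R1] Pic[OF xyz(1)]]])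
    also have "Pi y * (P y * R x y * Pi x) = Pi y * (P y * (R x y * Pi x))"
      using assoc_mult_mat[OF Pc[OF xyz(2)] R1 Pic[OF xyz(1)]] by simp
    also have "\<dots> = (Pi y * P y) * (R x y * Pi x)"
      by (rule assoc_mult_mat[OF Pic[OF xyz(2)] Pc[OF xyz(2)] mult_carrier_mat[OF R1 Pic[OF xyz(1)]], symmetric])
    also have "\<dots> = R x y * Pi x" using PiP[OF xyz(2)] left_mult_one_mat[OF mult_carrier_mat[OF R1 Pic[OF xyz(1)]]] by simp
    also have "(P z * R y z) * (R x y * Pi x) = P z * (R y z * (R x y * Pi x))"
      by (rule assoc_mult_mat[OF Pc[OF xyz(3)] R2 mult_carrier_mat[OF R1 Pic[OF xyz(1)]]])
    also have "R y z * (R x y * Pi x) = (R y z * R x y) * Pi x"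
      by (rule assoc_mult_mat[OF R2 R1 Pic[OF xyz(1)], symmetric])
    also have "P z * ((R y z * R x y) * Pi x) = X x z" unfolding Rcomp X_def
      by (rule assoc_mult_mat[OF Pc[OF xyz(3)] R3 Pic[OF xyz(1)], symmetric])
    finally have XX: "X y z * X x y = X x z" .
    have "X y z * X x y = four_block_mat (rmap ?T y z * rmap ?T x y + 0\<^sub>m (ov z) (r y - ov y) * 0\<^sub>m (r y - ov y) (ov x))
       (rmap ?T y z * 0\<^sub>m (ov y) (r x - ov x) + 0\<^sub>m (ov z) (r y - ov y) * rmap Q x y)
       (0\<^sub>m (r z - ov z) (ov y) * rmap ?T x y + rmap Q y z * 0\<^sub>m (r y - ov y) (ov x))
       (0\<^sub>m (r z - ov z) (ov y) * 0\<^sub>m (ov y) (r x - ov x) + rmap Q y z * rmap Q x y)"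
      unfolding blockX[OF xyz(2,3,5)] blockX[OF xyz(1,2,4)]
      by (rule mult_four_block_mat[OF Tc _ _ Qc Tc _ _ Qc]) auto
    also have "\<dots> = four_block_mat (rmap ?T x z) (0\<^sub>m (ov z) (r x - ov x)) (0\<^sub>m (r z - ov z) (ov x)) (rmap Q y z * rmap Q x y)"
      using Tc[of x y] Tc[of y z] Qc[of x y] Qc[of y z] Tcomp[OF xyz] Tc[of x z] by simp
    finally have "four_block_mat (rmap ?T x z) (0\<^sub>m (ov z) (r x - ov x)) (0\<^sub>m (r z - ov z) (ov x)) (rmap Q y z * rmap Q x y) =
       four_block_mat (rmap ?T x z) (0\<^sub>m (ov z) (r x - ov x)) (0\<^sub>m (r z - ov z) (ov x)) (rmap Q x z)"
      unfolding XX blockX[OF xyz(1,3) xz] by simp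
    from fb_inj[OF this Tc Tc mult_carrier_mat[OF Qc Qc] Qc]
    show "rmap Q y z * rmap Q x y = rmap Q x z" by simp
  qed
  have Pinv: "\<And>x. x \<in> S \<Longrightarrow> invertible_mat (P x)"
  proof -
    fix x assume x: "x \<in> S"
    have "dim_row (P x) = r x" "dim_col (P x) = r x" "dim_row (Pi x) = r x" using Pc[OF x] Pic[OF x] by auto
    thus "invertible_mat (P x)" unfolding invertible_mat_def inverts_mat_def
      using PPi[OF x] PiP[OF x] by (auto simp: square_mat.simps intro!: exI[of _ "Pi x"])
  qed
  have PX: "\<And>x y. x \<in> S \<Longrightarrow> y \<in> S \<Longrightarrow> leq m n x y \<Longrightarrow> P y * R x y = X x y * P x"
  proof -
    fix x y assume xy: "x \<in> S" "y \<in> S" "leq m n x y"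
    have "X x y * P x = P y * R x y * (Pi x * P x)" unfolding X_def
      by (rule assoc_mult_mat[OF mult_carrier_mat[OF Pc[OF xy(2)] Rc[OF xy]] Pic[OF xy(1)] Pc[OF xy(1)]])
    thus "P y * R x y = X x y * P x" using PiP[OF xy(1)] right_mult_one_mat[OF mult_carrier_mat[OF Pc[OF xy(2)] Rc[OF xy]]] by simp
  qed
  have isoQ: "iso_rep m n S N (bsum ?T Q)"
    unfolding iso_rep_def
  proof (rule exI[of _ P], intro conjI ballI impI)
    fix x assume x: "x \<in> S"
    show "P x \<in> carrier_mat (rdim (bsum ?T Q) x) (rdim N x)" using Pc[OF x] ro[OF x] unfolding Q_def r_def ov_def by simp
    show "invertible_mat (P x)" by (rule Pinv[OF x])
  next
    fix x y assume xy: "x \<in> S" "y \<in> S" "leq m n x y"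
    show "P y * rmap N x y = rmap (bsum ?T Q) x y * P x"
      using PX[OF xy] blockX[OF xy] bsumX[of x y] unfolding R_def by simp
  qed
  have "\<not> nonzero_rep S Q"
  proof
    assume "nonzero_rep S Q"
    thus False using indec Qrep isoQ by blast
  qed
  hence ro0: "\<And>x. x \<in> S \<Longrightarrow> r x = ov x" using ro unfolding nonzero_rep_def Q_def by fastforce
  show ?thesis
    unfolding iso_rep_def
  proof (rule exI[of _ P], intro conjI ballI impI)
    fix x assume x: "x \<in> S"
    show "P x \<in> carrier_mat (rdim ?T x) (rdim N x)" using Pc[OF x] ro0[OF x] unfolding r_def ov_def by simp
    show "invertible_mat (P x)" by (rule Pinv[OF x])
  next
    fix x y assume xy: "x \<in> S" "y \<in> S" "leq m n x y"
    have Q0: "rmap Q x y = 0\<^sub>m 0 0" using Qc[of x y] ro0[OF xy(1)] ro0[OF xy(2)] by (intro eq_matI) auto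
    have "X x y = rmap ?T x y"
      unfolding blockX[OF xy] Q0 using ro0[OF xy(1)] ro0[OF xy(2)] fb_zero_corner[OF Tc[of x y]] by simp
    thus "P y * rmap N x y = rmap ?T x y * P x" using PX[OF xy] unfolding R_def by simp
  qed
qed




lemma indec_like_or_null:
  fixes N :: "'a::field rep"
  assumes Sg: "S \<subseteq> grid m n" and T: "is_rep m n S (intv_rep I :: 'a rep)"
    and cc: "cconn m n (S \<inter> I)" and x0: "x0 \<in> S \<inter> I"
    and ind: "indecomposable m n S N"
  shows "iso_rep m n S N (intv_rep I) \<or> null_rep m n S (intv_rep I) x0 N"
proof (rule disjCI)
  let ?T = "intv_rep I :: 'a rep"
  assume "\<not> null_rep m n S ?T x0 N"
  then obtain F G where F: "rhom m n S ?T N F" and G: "rhom m n S N ?T G" and c: "(G x0 * F x0) $$ (0,0) \<noteq> 0"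
    unfolding null_rep_def by blast
  have N: "is_rep m n S N" using ind unfolding indecomposable_def by blast
  define c where "c = (G x0 * F x0) $$ (0,0)"
  define G' where "G' = (\<lambda>x. (1 / c) \<cdot>\<^sub>m G x)"
  have G': "rhom m n S N ?T G'" unfolding G'_def by (rule hom_smult[OF N T G])
  have x0S: "x0 \<in> S" and x0I: "x0 \<in> I" using x0 by auto
  have Fc: "F x0 \<in> carrier_mat (rdim N x0) 1" using homD(1)[OF F x0S] x0I by simp
  have Gc: "G x0 \<in> carrier_mat 1 (rdim N x0)" using homD(1)[OF G x0S] x0I by simp
  have one: "G' x0 * F x0 = 1\<^sub>m 1"
  proof -
    have "G' x0 * F x0 = (1 / c) \<cdot>\<^sub>m (G x0 * F x0)" unfolding G'_def by (rule mult_smult_assoc_mat[OF Gc Fc])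
    moreover have "((1 / c) \<cdot>\<^sub>m (G x0 * F x0)) = 1\<^sub>m 1"
      by (rule eq_matI) (use Gc Fc c in \<open>auto simp: c_def\<close>)
    ultimately show ?thesis by simp
  qed
  have GF: "\<forall>x\<in>S \<inter> I. G' x * F x = 1\<^sub>m 1"
    using pair_const[OF N F G' cc _ x0] one by simp
  have nzT: "nonzero_rep S ?T" unfolding nonzero_rep_def using x0 by auto
  have "\<not> (\<exists>Q. is_rep m n S Q \<and> nonzero_rep S Q \<and> iso_rep m n S N (bsum ?T Q))"
  proof
    assume "\<exists>Q. is_rep m n S Q \<and> nonzero_rep S Q \<and> iso_rep m n S N (bsum ?T Q)"
    then obtain Q where "is_rep m n S Q" "nonzero_rep S Q" "iso_rep m n S N (dsum [?T, Q])"
      unfolding dsum_two by blast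
    thus False using ind T nzT unfolding indecomposable_def by blast
  qed
  thus "iso_rep m n S N ?T" by (rule split_off[OF Sg N T F G' GF])
qed

lemma dsum_append: "dsum (LA @ LB) = bsum (dsum LA) (dsum LB)"
  by (simp add: dsum_def bsum_def diag_block_mat_append Let_def)

lemma bsum_iso:
  assumes A: "is_rep m n S A" and A': "is_rep m n S A'" and B: "is_rep m n S B" and B': "is_rep m n S B'"
    and iA: "iso_rep m n S A A'" and iB: "iso_rep m n S B B'"
  shows "iso_rep m n S (bsum A B) (bsum A' B')"
proof -
  obtain f g where fg: "rhom m n S A A' f" "rhom m n S A' A g"
     "\<forall>x\<in>S. g x * f x = 1\<^sub>m (rdim A x) \<and> f x * g x = 1\<^sub>m (rdim A' x) \<and> rdim A x = rdim A' x"
    using iso_homs[OF A A' iA] by blast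
  obtain f' g' where fg': "rhom m n S B B' f'" "rhom m n S B' B g'"
     "\<forall>x\<in>S. g' x * f' x = 1\<^sub>m (rdim B x) \<and> f' x * g' x = 1\<^sub>m (rdim B' x) \<and> rdim B x = rdim B' x"
    using iso_homs[OF B B' iB] by blast
  define a where "a = rdim A" define b where "b = rdim B"
  have a': "\<And>x. x \<in> S \<Longrightarrow> rdim A' x = a x" and b': "\<And>x. x \<in> S \<Longrightarrow> rdim B' x = b x"
    using fg(3) fg'(3) unfolding a_def b_def by auto
  define \<phi> where "\<phi> = (\<lambda>x. four_block_mat (f x) (0\<^sub>m (a x) (b x)) (0\<^sub>m (b x) (a x)) (f' x))"
  define \<psi> where "\<psi> = (\<lambda>x. four_block_mat (g x) (0\<^sub>m (a x) (b x)) (0\<^sub>m (b x) (a x)) (g' x))"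
  have fc: "\<And>x. x \<in> S \<Longrightarrow> f x \<in> carrier_mat (a x) (a x) \<and> g x \<in> carrier_mat (a x) (a x) \<and> f' x \<in> carrier_mat (b x) (b x) \<and> g' x \<in> carrier_mat (b x) (b x)"
    using homD(1)[OF fg(1)] homD(1)[OF fg(2)] homD(1)[OF fg'(1)] homD(1)[OF fg'(2)] a' b' unfolding a_def b_def by auto
  have hom1: "\<And>X Y u v. is_rep m n S X \<Longrightarrow> is_rep m n S Y \<Longrightarrow> is_rep m n S (bsum X Y) \<Longrightarrow>
     (\<And>x. x \<in> S \<Longrightarrow> rdim X x = a x) \<Longrightarrow> (\<And>x. x \<in> S \<Longrightarrow> rdim Y x = b x) \<Longrightarrow>
     is_rep m n S (bsum X' Y') \<Longrightarrow> True" by simp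
  have homphi: "rhom m n S (bsum A B) (bsum A' B') \<phi>"
    unfolding rhom_def
  proof (intro conjI ballI impI)
    fix x assume x: "x \<in> S"
    show "\<phi> x \<in> carrier_mat (rdim (bsum A' B') x) (rdim (bsum A B) x)"
      unfolding \<phi>_def using fc[OF x] a' b' x unfolding a_def b_def by simp
  next
    fix x y assume xy: "x \<in> S" "y \<in> S" "leq m n x y"
    have RA: "rmap A x y \<in> carrier_mat (a y) (a x)" and RB: "rmap B x y \<in> carrier_mat (b y) (b x)"
      using rep_carrier[OF A xy] rep_carrier[OF B xy] unfolding a_def b_def by auto
    have RA': "rmap A' x y \<in> carrier_mat (a y) (a x)" and RB': "rmap B' x y \<in> carrier_mat (b y) (b x)"
      using rep_carrier[OF A' xy] rep_carrier[OF B' xy] a' b' xy by auto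
    have bs: "rmap (bsum A B) x y = four_block_mat (rmap A x y) (0\<^sub>m (a y) (b x)) (0\<^sub>m (b y) (a x)) (rmap B x y)"
      using rmap_bsum[OF A B xy] unfolding a_def b_def .
    have bs': "rmap (bsum A' B') x y = four_block_mat (rmap A' x y) (0\<^sub>m (a y) (b x)) (0\<^sub>m (b y) (a x)) (rmap B' x y)"
      using rmap_bsum[OF A' B' xy] a' b' xy by simp
    note cx = fc[OF xy(1)] and cy = fc[OF xy(2)]
    have "\<phi> y * rmap (bsum A B) x y = four_block_mat (f y * rmap A x y + 0\<^sub>m (a y) (b y) * 0\<^sub>m (b y) (a x))
        (f y * 0\<^sub>m (a y) (b x) + 0\<^sub>m (a y) (b y) * rmap B x y)
        (0\<^sub>m (b y) (a y) * rmap A x y + f' y * 0\<^sub>m (b y) (a x))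
        (0\<^sub>m (b y) (a y) * 0\<^sub>m (a y) (b x) + f' y * rmap B x y)"
      unfolding \<phi>_def bs by (rule mult_four_block_mat) (use cy RA RB in auto)
    also have "\<dots> = four_block_mat (f y * rmap A x y) (0\<^sub>m (a y) (b x)) (0\<^sub>m (b y) (a x)) (f' y * rmap B x y)"
      using cy RA RB by (elim conjE) simp
    also have "\<dots> = four_block_mat (rmap A' x y * f x) (0\<^sub>m (a y) (b x)) (0\<^sub>m (b y) (a x)) (rmap B' x y * f' x)"
      using homD(2)[OF fg(1) xy] homD(2)[OF fg'(1) xy] by simp
    also have "\<dots> = four_block_mat (rmap A' x y * f x + 0\<^sub>m (a y) (b x) * 0\<^sub>m (b x) (a x))
        (rmap A' x y * 0\<^sub>m (a x) (b x) + 0\<^sub>m (a y) (b x) * f' x)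
        (0\<^sub>m (b y) (a x) * f x + rmap B' x y * 0\<^sub>m (b x) (a x))
        (0\<^sub>m (b y) (a x) * 0\<^sub>m (a x) (b x) + rmap B' x y * f' x)"
      using cx RA' RB' by (elim conjE) simp
    also have "\<dots> = rmap (bsum A' B') x y * \<phi> x"
      unfolding \<phi>_def bs' by (rule mult_four_block_mat[symmetric]) (use cx RA' RB' in auto)
    finally show "\<phi> y * rmap (bsum A B) x y = rmap (bsum A' B') x y * \<phi> x" .
  qed
  have hompsi: "rhom m n S (bsum A' B') (bsum A B) \<psi>"
    unfolding rhom_def
  proof (intro conjI ballI impI)
    fix x assume x: "x \<in> S"
    show "\<psi> x \<in> carrier_mat (rdim (bsum A B) x) (rdim (bsum A' B') x)"
      unfolding \<psi>_def using fc[OF x] a' b' x unfolding a_def b_def by simp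
  next
    fix x y assume xy: "x \<in> S" "y \<in> S" "leq m n x y"
    have RA: "rmap A x y \<in> carrier_mat (a y) (a x)" and RB: "rmap B x y \<in> carrier_mat (b y) (b x)"
      using rep_carrier[OF A xy] rep_carrier[OF B xy] unfolding a_def b_def by auto
    have RA': "rmap A' x y \<in> carrier_mat (a y) (a x)" and RB': "rmap B' x y \<in> carrier_mat (b y) (b x)"
      using rep_carrier[OF A' xy] rep_carrier[OF B' xy] a' b' xy by auto
    have bs: "rmap (bsum A B) x y = four_block_mat (rmap A x y) (0\<^sub>m (a y) (b x)) (0\<^sub>m (b y) (a x)) (rmap B x y)"
      using rmap_bsum[OF A B xy] unfolding a_def b_def .
    have bs': "rmap (bsum A' B') x y = four_block_mat (rmap A' x y) (0\<^sub>m (a y) (b x)) (0\<^sub>m (b y) (a x)) (rmap B' x y)"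
      using rmap_bsum[OF A' B' xy] a' b' xy by simp
    note cx = fc[OF xy(1)] and cy = fc[OF xy(2)]
    have "\<psi> y * rmap (bsum A' B') x y = four_block_mat (g y * rmap A' x y + 0\<^sub>m (a y) (b y) * 0\<^sub>m (b y) (a x))
        (g y * 0\<^sub>m (a y) (b x) + 0\<^sub>m (a y) (b y) * rmap B' x y)
        (0\<^sub>m (b y) (a y) * rmap A' x y + g' y * 0\<^sub>m (b y) (a x))
        (0\<^sub>m (b y) (a y) * 0\<^sub>m (a y) (b x) + g' y * rmap B' x y)"
      unfolding \<psi>_def bs' by (rule mult_four_block_mat) (use cy RA' RB' in auto)
    also have "\<dots> = four_block_mat (g y * rmap A' x y) (0\<^sub>m (a y) (b x)) (0\<^sub>m (b y) (a x)) (g' y * rmap B' x y)"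
      using cy RA' RB' by (elim conjE) simp
    also have "\<dots> = four_block_mat (rmap A x y * g x) (0\<^sub>m (a y) (b x)) (0\<^sub>m (b y) (a x)) (rmap B x y * g' x)"
      using homD(2)[OF fg(2) xy] homD(2)[OF fg'(2) xy] by simp
    also have "\<dots> = four_block_mat (rmap A x y * g x + 0\<^sub>m (a y) (b x) * 0\<^sub>m (b x) (a x))
        (rmap A x y * 0\<^sub>m (a x) (b x) + 0\<^sub>m (a y) (b x) * g' x)
        (0\<^sub>m (b y) (a x) * g x + rmap B x y * 0\<^sub>m (b x) (a x))
        (0\<^sub>m (b y) (a x) * 0\<^sub>m (a x) (b x) + rmap B x y * g' x)"
      using cx RA RB by (elim conjE) simp
    also have "\<dots> = rmap (bsum A B) x y * \<psi> x"
      unfolding \<psi>_def bs by (rule mult_four_block_mat[symmetric]) (use cx RA RB in auto)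
    finally show "\<psi> y * rmap (bsum A' B') x y = rmap (bsum A B) x y * \<psi> x" .
  qed
  show ?thesis
  proof (rule homs_iso[OF homphi hompsi], intro ballI conjI)
    fix x assume x: "x \<in> S"
    note cx = fc[OF x]
    have gf: "g x * f x = 1\<^sub>m (a x)" "g' x * f' x = 1\<^sub>m (b x)" "f x * g x = 1\<^sub>m (a x)" "f' x * g' x = 1\<^sub>m (b x)"
      using fg(3) fg'(3) x a' b' unfolding a_def b_def by auto
    have "\<psi> x * \<phi> x = four_block_mat (g x * f x + 0\<^sub>m (a x) (b x) * 0\<^sub>m (b x) (a x))
        (g x * 0\<^sub>m (a x) (b x) + 0\<^sub>m (a x) (b x) * f' x)
        (0\<^sub>m (b x) (a x) * f x + g' x * 0\<^sub>m (b x) (a x))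
        (0\<^sub>m (b x) (a x) * 0\<^sub>m (a x) (b x) + g' x * f' x)"
      unfolding \<psi>_def \<phi>_def by (rule mult_four_block_mat) (use cx in auto)
    also have "\<dots> = 1\<^sub>m (rdim (bsum A B) x)" using cx gf unfolding a_def b_def by (elim conjE) simp
    finally show "\<psi> x * \<phi> x = 1\<^sub>m (rdim (bsum A B) x)" .
    have "\<phi> x * \<psi> x = four_block_mat (f x * g x + 0\<^sub>m (a x) (b x) * 0\<^sub>m (b x) (a x))
        (f x * 0\<^sub>m (a x) (b x) + 0\<^sub>m (a x) (b x) * g' x)
        (0\<^sub>m (b x) (a x) * g x + f' x * 0\<^sub>m (b x) (a x))
        (0\<^sub>m (b x) (a x) * 0\<^sub>m (a x) (b x) + f' x * g' x)"
      unfolding \<psi>_def \<phi>_def by (rule mult_four_block_mat) (use cx in auto)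
    also have "\<dots> = 1\<^sub>m (rdim (bsum A' B') x)" using cx gf a' b' x unfolding a_def b_def by (elim conjE) simp
    finally show "\<phi> x * \<psi> x = 1\<^sub>m (rdim (bsum A' B') x)" .
    show "rdim (bsum A B) x = rdim (bsum A' B') x" using a' b' x unfolding a_def b_def by simp
  qed
qed


lemma finite_grid: "finite (grid m n)"
  unfolding grid_def by simp

lemma KS_exists:
  fixes M :: "'a::field rep"
  assumes Sg: "S \<subseteq> grid m n" and M: "is_rep m n S M"
  shows "\<exists>Ls. KS_decomp m n S M Ls"
  using M
proof (induction "\<Sum>x\<in>S. rdim M x" arbitrary: M rule: less_induct)
  case less
  have fin: "finite S" using finite_subset[OF Sg finite_grid] .
  show ?case
  proof (cases "nonzero_rep S M")
    case False
    have "iso_rep m n S M (dsum [])"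
    proof (rule iso_eq[OF less.prems])
      show "\<forall>x\<in>S. rdim M x = rdim (dsum []) x" using False unfolding nonzero_rep_def dsum_def by auto
      show "\<forall>x\<in>S. \<forall>y\<in>S. leq m n x y \<longrightarrow> rmap M x y = rmap (dsum []) x y"
      proof (intro ballI impI)
        fix x y assume xy: "x \<in> S" "y \<in> S" "leq m n x y"
        have "rmap M x y \<in> carrier_mat 0 0" using rep_carrier[OF less.prems xy] False xy unfolding nonzero_rep_def by auto
        thus "rmap M x y = rmap (dsum []) x y" unfolding dsum_def by (intro eq_matI) auto
      qed
    qed
    thus ?thesis unfolding KS_decomp_def by (intro exI[of _ "[]"]) auto
  next
    case nz: True
    show ?thesis
    proof (cases "indecomposable m n S M")
      case True
      thus ?thesis unfolding KS_decomp_def dsum_single using iso_refl[OF less.prems]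
        by (intro exI[of _ "[M]"]) (simp add: dsum_single)
    next
      case False
      then obtain A B where AB: "is_rep m n S A" "is_rep m n S B" "nonzero_rep S A" "nonzero_rep S B"
        "iso_rep m n S M (dsum [A, B])"
        using nz less.prems unfolding indecomposable_def by blast
      have iso: "iso_rep m n S M (bsum A B)" using AB(5) unfolding dsum_two .
      have dims: "\<And>x. x \<in> S \<Longrightarrow> rdim M x = rdim A x + rdim B x" using iso_dims[OF iso] by simp
      have sumM: "(\<Sum>x\<in>S. rdim M x) = (\<Sum>x\<in>S. rdim A x) + (\<Sum>x\<in>S. rdim B x)"
        using dims by (simp add: sum.distrib)
      obtain xa where xa: "xa \<in> S" "rdim A xa > 0" using AB(3) unfolding nonzero_rep_def by blast
      obtain xb where xb: "xb \<in> S" "rdim B xb > 0" using AB(4) unfolding nonzero_rep_def by blast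
      have "rdim A xa \<le> (\<Sum>x\<in>S. rdim A x)" by (rule member_le_sum[OF xa(1)]) (use fin in auto)
      have "rdim B xb \<le> (\<Sum>x\<in>S. rdim B x)" by (rule member_le_sum[OF xb(1)]) (use fin in auto)
      have ltA: "(\<Sum>x\<in>S. rdim A x) < (\<Sum>x\<in>S. rdim M x)" using sumM xb \<open>rdim B xb \<le> _\<close> by linarith
      have ltB: "(\<Sum>x\<in>S. rdim B x) < (\<Sum>x\<in>S. rdim M x)" using sumM xa \<open>rdim A xa \<le> _\<close> by linarith
      obtain LA where LA: "KS_decomp m n S A LA" using less.hyps[OF ltA AB(1)] by blast
      obtain LB where LB: "KS_decomp m n S B LB" using less.hyps[OF ltB AB(2)] by blast
      have repsA: "\<forall>L\<in>set LA. is_rep m n S L" and repsB: "\<forall>L\<in>set LB. is_rep m n S L"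
        using LA LB unfolding KS_decomp_def indecomposable_def by auto
      have dA: "is_rep m n S (dsum LA)" by (rule is_rep_dsum[OF Sg repsA])
      have dB: "is_rep m n S (dsum LB)" by (rule is_rep_dsum[OF Sg repsB])
      have i1: "iso_rep m n S (bsum A B) (bsum (dsum LA) (dsum LB))"
        by (rule bsum_iso[OF AB(1) dA AB(2) dB]) (use LA LB in \<open>auto simp: KS_decomp_def\<close>)
      have i2: "iso_rep m n S M (bsum (dsum LA) (dsum LB))"
        by (rule iso_trans[OF less.prems is_rep_bsum[OF AB(1,2)] is_rep_bsum[OF dA dB] iso i1])
      show ?thesis
        using i2 LA LB unfolding KS_decomp_def dsum_append[symmetric]
        by (intro exI[of _ "LA @ LB"]) auto
    qed
  qed
qed

lemma mult_char:
  fixes X :: "'a::field rep"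
  assumes Sg: "S \<subseteq> grid m n" and T: "is_rep m n S (intv_rep I :: 'a rep)"
    and cc: "cconn m n (S \<inter> I)" and x0: "x0 \<in> S \<inter> I"
    and X: "is_rep m n S X" and iso: "iso_rep m n S X (dsum Ls)"
    and Ls: "\<forall>L\<in>set Ls. is_rep m n S L \<and> (iso_rep m n S L (intv_rep I) \<or> null_rep m n S (intv_rep I) x0 L)"
  shows "mult m n S X (intv_rep I) = length (filter (\<lambda>N. iso_rep m n S N (intv_rep I)) Ls)"
proof -
  let ?T = "intv_rep I :: 'a rep"
  let ?c = "\<lambda>Ls. length (filter (\<lambda>N. iso_rep m n S N ?T) Ls)"
  have x0S: "x0 \<in> S" and T1: "rdim ?T x0 = 1" using x0 by auto
  have dL: "is_rep m n S (dsum Ls)" using is_rep_dsum[OF Sg] Ls by auto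
  have all: "\<And>Ls'. KS_decomp m n S X Ls' \<Longrightarrow> ?c Ls' = ?c Ls"
  proof -
    fix Ls' assume KS: "KS_decomp m n S X Ls'"
    have Ls': "\<forall>L\<in>set Ls'. is_rep m n S L \<and> (iso_rep m n S L ?T \<or> null_rep m n S ?T x0 L)"
      using KS indec_like_or_null[OF Sg T cc x0] unfolding KS_decomp_def indecomposable_def by blast
    have reps': "\<forall>L\<in>set Ls'. is_rep m n S L" using Ls' by blast
    have reps: "\<forall>L\<in>set Ls. is_rep m n S L" using Ls by blast
    have dL': "is_rep m n S (dsum Ls')" using is_rep_dsum[OF Sg reps'] .
    have iso': "iso_rep m n S X (dsum Ls')" using KS unfolding KS_decomp_def by blast
    have i12: "iso_rep m n S (dsum Ls') (dsum Ls)" by (rule iso_trans[OF dL' X dL iso_sym[OF X dL' iso'] iso])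
    have i21: "iso_rep m n S (dsum Ls) (dsum Ls')" by (rule iso_sym[OF dL' dL i12])
    have "splits m n S ?T x0 (dsum Ls) (?c Ls')"
      by (rule splits_iso[OF T dL' dL x0S i12 splits_dsum[OF T x0S T1 Sg reps']])
    hence le1: "?c Ls' \<le> ?c Ls" by (rule splits_upper[OF T x0S T1 Sg Ls])
    have "splits m n S ?T x0 (dsum Ls') (?c Ls)"
      by (rule splits_iso[OF T dL dL' x0S i21 splits_dsum[OF T x0S T1 Sg reps]])
    hence le2: "?c Ls \<le> ?c Ls'" by (rule splits_upper[OF T x0S T1 Sg Ls'])
    show "?c Ls' = ?c Ls" using le1 le2 by simp
  qed
  obtain Ls0 where Ls0: "KS_decomp m n S X Ls0" using KS_exists[OF Sg X] by blast
  have P: "\<exists>Ls'. KS_decomp m n S X Ls' \<and> ?c Ls' = ?c Ls" using Ls0 all by blast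
  show ?thesis unfolding mult_def
  proof (rule someI2_ex)
    show "\<exists>d. \<exists>Ls'. KS_decomp m n S X Ls' \<and> ?c Ls' = d" using P by blast
  next
    fix d assume "\<exists>Ls'. KS_decomp m n S X Ls' \<and> ?c Ls' = d"
    thus "d = ?c Ls" using all by blast
  qed
qed




section \<open>Combinatorics of grid intervals\<close>

lemma interval_grid: "is_interval m n J \<Longrightarrow> J \<subseteq> grid m n"
  unfolding is_interval_def by blast

lemma is_rep_interval:
  assumes "S \<subseteq> grid m n" "is_interval m n J"
  shows "is_rep m n S (intv_rep J :: 'a::field rep)"
proof (rule is_rep_intv[OF assms(1)], intro ballI impI)
  fix x y z assume "x \<in> S" "y \<in> S" "z \<in> S" "leq m n x y" "leq m n y z" "x \<in> J" "z \<in> J"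
  thus "y \<in> J" using assms(2) unfolding is_interval_def convex_set_def by blast
qed

lemma src_below:
  assumes Ig: "I \<subseteq> grid m n"
  shows "z \<in> I \<Longrightarrow> \<exists>s\<in>I. (\<not> (\<exists>a\<in>I. arrow m n a s)) \<and> leq m n s z"
proof (induction "fst z + snd z" arbitrary: z rule: less_induct)
  case less
  show ?case
  proof (cases "\<exists>a\<in>I. arrow m n a z")
    case False
    thus ?thesis using less.prems leq_refl Ig by blast
  next
    case True
    then obtain a where a: "a \<in> I" "arrow m n a z" by blast
    have "fst a + snd a < fst z + snd z" using a(2) unfolding arrow_def by auto
    then obtain s where s: "s \<in> I" "\<not> (\<exists>a\<in>I. arrow m n a s)" "leq m n s a" using less.hyps a(1) by blast
    thus ?thesis using leq_trans[OF s(3) arrow_leq[OF a(2)]] by blast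
  qed
qed

lemma snk_above:
  assumes Ig: "I \<subseteq> grid m n"
  shows "z \<in> I \<Longrightarrow> \<exists>t\<in>I. (\<not> (\<exists>b\<in>I. arrow m n t b)) \<and> leq m n z t"
proof (induction "m + n - (fst z + snd z)" arbitrary: z rule: less_induct)
  case less
  show ?case
  proof (cases "\<exists>b\<in>I. arrow m n z b")
    case False
    thus ?thesis using less.prems leq_refl Ig by blast
  next
    case True
    then obtain b where b: "b \<in> I" "arrow m n z b" by blast
    have "b \<in> grid m n" using b(2) unfolding arrow_def by auto
    hence "fst b + snd b \<le> m + n" unfolding grid_def by auto
    moreover have "fst b + snd b = fst z + snd z + 1" using b(2) unfolding arrow_def by auto
    ultimately have "m + n - (fst b + snd b) < m + n - (fst z + snd z)" by linarith
    then obtain t where t: "t \<in> I" "\<not> (\<exists>c\<in>I. arrow m n t c)" "leq m n b t" using less.hyps b(1) by blast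
    thus ?thesis using leq_trans[OF arrow_leq[OF b(2)] t(3)] by blast
  qed
qed

lemma ess_sub: "ess m n c I \<subseteq> I"
  by (cases c) (auto simp: ess_def sources_sinks_def)

lemma ss_sub_ess: "sources_sinks m n I \<subseteq> ess m n c I"
proof (cases c)
  case CC
  show ?thesis
  proof
    fix x assume x: "x \<in> sources_sinks m n I"
    hence "x \<in> I" unfolding sources_sinks_def by auto
    moreover have "x \<in> fst ` sources_sinks m n I \<times> snd ` sources_sinks m n I"
      using x by (auto simp: mem_Times_iff)
    ultimately show "x \<in> ess m n c I" using CC by (simp add: ess_def)
  qed
qed (auto simp: ess_def sources_sinks_def)

lemma ss_sub_imp:
  assumes J: "is_interval m n J" and Ig: "I \<subseteq> grid m n" and ss: "sources_sinks m n I \<subseteq> J"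
  shows "I \<subseteq> J"
proof
  fix z assume z: "z \<in> I"
  obtain s where s: "s \<in> I" "\<not> (\<exists>a\<in>I. arrow m n a s)" "leq m n s z" using src_below[OF Ig z] by blast
  obtain t where t: "t \<in> I" "\<not> (\<exists>b\<in>I. arrow m n t b)" "leq m n z t" using snk_above[OF Ig z] by blast
  have "s \<in> J" "t \<in> J" using s t ss unfolding sources_sinks_def by auto
  thus "z \<in> J" using J s(3) t(3) unfolding is_interval_def convex_set_def by blast
qed

lemma ess_sub_imp:
  assumes J: "is_interval m n J" and Ig: "I \<subseteq> grid m n" and ss: "ess m n c I \<subseteq> J"
  shows "I \<subseteq> J"
  using ss_sub_imp[OF J Ig] ss ss_sub_ess by blast

lemma ess_nonempty:
  assumes "is_interval m n I" shows "\<exists>x. x \<in> ess m n c I"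
proof -
  obtain z where z: "z \<in> I" using assms unfolding is_interval_def by blast
  obtain s where s: "s \<in> I" "\<not> (\<exists>a\<in>I. arrow m n a s)" "leq m n s z"
    using src_below[OF interval_grid[OF assms] z] by blast
  hence "s \<in> sources_sinks m n I" unfolding sources_sinks_def by auto
  thus ?thesis using ss_sub_ess by blast
qed

lemma rtranclp_sym:
  assumes sym: "\<And>a b. r a b \<Longrightarrow> r b a" and "r\<^sup>*\<^sup>* x y"
  shows "r\<^sup>*\<^sup>* y x"
  using assms(2)
proof (induction rule: rtranclp_induct)
  case base thus ?case by simp
next
  case (step b c)
  thus ?case using sym converse_rtranclp_into_rtranclp by metis
qed

lemma ess_cconn:
  assumes I: "is_interval m n I"
  shows "cconn m n (ess m n c I)"
proof -
  let ?E = "ess m n c I"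
  let ?rel = "\<lambda>a b. a \<in> ?E \<and> b \<in> ?E \<and> (leq m n a b \<or> leq m n b a)"
  have Ig: "I \<subseteq> grid m n" using interval_grid[OF I] .
  have sym: "\<And>a b. ?rel a b \<Longrightarrow> ?rel b a" by blast
  define s where "s = (\<lambda>z. SOME s. s \<in> I \<and> (\<not> (\<exists>a\<in>I. arrow m n a s)) \<and> leq m n s z)"
  define t where "t = (\<lambda>z. SOME t. t \<in> I \<and> (\<not> (\<exists>b\<in>I. arrow m n t b)) \<and> leq m n z t)"
  have sP: "\<And>z. z \<in> I \<Longrightarrow> s z \<in> ?E \<and> leq m n (s z) z"
  proof -
    fix z assume z: "z \<in> I"
    have "s z \<in> I \<and> (\<not> (\<exists>a\<in>I. arrow m n a (s z))) \<and> leq m n (s z) z"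
      unfolding s_def by (rule someI_ex) (use src_below[OF Ig z] in blast)
    thus "s z \<in> ?E \<and> leq m n (s z) z" using ss_sub_ess unfolding sources_sinks_def by blast
  qed
  have tP: "\<And>z. z \<in> I \<Longrightarrow> t z \<in> ?E \<and> leq m n z (t z)"
  proof -
    fix z assume z: "z \<in> I"
    have "t z \<in> I \<and> (\<not> (\<exists>b\<in>I. arrow m n (t z) b)) \<and> leq m n z (t z)"
      unfolding t_def by (rule someI_ex) (use snk_above[OF Ig z] in blast)
    thus "t z \<in> ?E \<and> leq m n z (t z)" using ss_sub_ess unfolding sources_sinks_def by blast
  qed
  have stepA: "\<And>u v. u \<in> I \<Longrightarrow> v \<in> I \<Longrightarrow> leq m n u v \<Longrightarrow> ?rel\<^sup>*\<^sup>* (s u) (s v)"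
  proof -
    fix u v assume uv: "u \<in> I" "v \<in> I" "leq m n u v"
    have r1: "?rel (s u) (t v)" using sP[OF uv(1)] tP[OF uv(2)] leq_trans uv(3) by blast
    have r2: "?rel (t v) (s v)" using sP[OF uv(2)] tP[OF uv(2)] leq_trans by blast
    have "?rel\<^sup>*\<^sup>* (s u) (t v)" using r1 by (rule r_into_rtranclp)
    thus "?rel\<^sup>*\<^sup>* (s u) (s v)" using r2 by (rule rtranclp.rtrancl_into_rtrancl)
  qed
  have chain: "\<And>x y. (\<lambda>a b. a \<in> I \<and> b \<in> I \<and> (arrow m n a b \<or> arrow m n b a))\<^sup>*\<^sup>* x y \<Longrightarrow> x \<in> I \<Longrightarrow> ?rel\<^sup>*\<^sup>* (s x) (s y)"
  proof -
    fix x y assume c: "(\<lambda>a b. a \<in> I \<and> b \<in> I \<and> (arrow m n a b \<or> arrow m n b a))\<^sup>*\<^sup>* x y" and x: "x \<in> I"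
    from c show "?rel\<^sup>*\<^sup>* (s x) (s y)"
    proof (induction rule: rtranclp_induct)
      case base thus ?case by simp
    next
      case (step b c)
      have "?rel\<^sup>*\<^sup>* (s b) (s c)"
      proof (cases "arrow m n b c")
        case True thus ?thesis using stepA step(2) arrow_leq by blast
      next
        case False
        hence "arrow m n c b" using step(2) by blast
        hence "?rel\<^sup>*\<^sup>* (s c) (s b)" using stepA step(2) arrow_leq by blast
        thus ?thesis using rtranclp_sym[of ?rel, OF sym] by blast
      qed
      thus ?case using step(3) by (meson rtranclp_trans)
    qed
  qed
  show ?thesis unfolding cconn_def
  proof (intro ballI)
    fix x y assume x: "x \<in> ?E" and y: "y \<in> ?E"
    have xI: "x \<in> I" and yI: "y \<in> I" using x y ess_sub by blast+
    have r1: "?rel x (s x)" using x sP[OF xI] by blast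
    have r3: "?rel (s y) y" using y sP[OF yI] by blast
    have "(\<lambda>a b. a \<in> I \<and> b \<in> I \<and> (arrow m n a b \<or> arrow m n b a))\<^sup>*\<^sup>* x y"
      using I xI yI unfolding is_interval_def connected_set_def by blast
    hence r2: "?rel\<^sup>*\<^sup>* (s x) (s y)" using chain xI by blast
    have "?rel\<^sup>*\<^sup>* x (s y)" using r1 r2 by (rule converse_rtranclp_into_rtranclp)
    thus "?rel\<^sup>*\<^sup>* x y" using r3 by (rule rtranclp.rtrancl_into_rtrancl)
  qed
qed

lemma interval_cconn:
  assumes J: "is_interval m n J"
  shows "cconn m n J"
  unfolding cconn_def
proof (intro ballI)
  fix x y assume "x \<in> J" "y \<in> J"
  hence "(\<lambda>a b. a \<in> J \<and> b \<in> J \<and> (arrow m n a b \<or> arrow m n b a))\<^sup>*\<^sup>* x y"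
    using J unfolding is_interval_def connected_set_def by blast
  thus "(\<lambda>a b. a \<in> J \<and> b \<in> J \<and> (leq m n a b \<or> leq m n b a))\<^sup>*\<^sup>* x y"
    by (rule rtranclp_mono[THEN predicate2D, rotated]) (auto intro: arrow_leq)
qed

lemma interval_adjacent:
  assumes J': "is_interval m n J'" and sub: "J \<subseteq> J'" and ne: "J \<noteq> {}" and neq: "J \<noteq> J'"
  shows "\<exists>y z. y \<in> J \<and> z \<in> J' \<and> z \<notin> J \<and> (arrow m n y z \<or> arrow m n z y)"
proof -
  obtain x where x: "x \<in> J" using ne by blast
  obtain w where w: "w \<in> J'" "w \<notin> J" using sub neq by blast
  have "(\<lambda>a b. a \<in> J' \<and> b \<in> J' \<and> (arrow m n a b \<or> arrow m n b a))\<^sup>*\<^sup>* x w"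
    using J' x w sub unfolding is_interval_def connected_set_def by blast
  thus ?thesis using w(2)
  proof (induction rule: rtranclp_induct)
    case base thus ?case using x by simp
  next
    case (step b c)
    show ?case
    proof (cases "b \<in> J")
      case True thus ?thesis using step by blast
    next
      case False thus ?thesis using step.IH by blast
    qed
  qed
qed

section \<open>Like and null summands\<close>

lemma thin_null:
  fixes C D :: "vtx set"
  assumes Sg: "S \<subseteq> grid m n" and T: "is_rep m n S (intv_rep C :: 'a::field rep)" and X: "is_rep m n S (intv_rep D :: 'a rep)"
    and cc: "cconn m n (S \<inter> C)" and x0: "x0 \<in> S \<inter> C"
    and bad: "(\<exists>y\<in>S \<inter> C. y \<notin> D) \<or> (\<exists>y\<in>S \<inter> C. \<exists>z\<in>S. z \<in> D \<and> z \<notin> C \<and> y \<in> D \<and> (leq m n z y \<or> leq m n y z))"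
  shows "null_rep m n S (intv_rep C :: 'a rep) x0 (intv_rep D)"
  unfolding null_rep_def
proof (intro allI impI)
  let ?T = "intv_rep C :: 'a rep" and ?X = "intv_rep D :: 'a rep"
  fix F G assume F: "rhom m n S ?T ?X F" and G: "rhom m n S ?X ?T G"
  have zero: "\<exists>y\<in>S \<inter> C. G y * F y = 0\<^sub>m 1 1"
  proof (cases "\<exists>y\<in>S \<inter> C. y \<notin> D")
    case True
    then obtain y where y: "y \<in> S \<inter> C" "y \<notin> D" by blast
    have "F y \<in> carrier_mat 0 1" "G y \<in> carrier_mat 1 0" using homD(1)[OF F, of y] homD(1)[OF G, of y] y by auto
    thus ?thesis using y zero_by_dims by blast
  next
    case False
    then obtain y z where yz: "y \<in> S \<inter> C" "z \<in> S" "z \<in> D" "z \<notin> C" "y \<in> D" "leq m n z y \<or> leq m n y z"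
      using bad by blast
    have Fy: "F y \<in> carrier_mat 1 1" and Gy: "G y \<in> carrier_mat 1 1" using homD(1)[OF F, of y] homD(1)[OF G, of y] yz by auto
    have XI: "\<And>a b. a \<in> D \<Longrightarrow> b \<in> D \<Longrightarrow> rmap ?X a b = 1\<^sub>m 1" by (rule rmap_intv_in)
    show ?thesis
    proof (cases "leq m n z y")
      case True
      have Gz: "G z \<in> carrier_mat 0 1" using homD(1)[OF G, of z] yz by auto
      have "G y * rmap ?X z y = rmap ?T z y * G z" using homD(2)[OF G, of z y] True yz by auto
      moreover have "rmap ?T z y \<in> carrier_mat 1 0" using rmap_intv_carrier[of C z y] yz by auto
      ultimately have "G y = 0\<^sub>m 1 1" using XI[OF yz(3,5)] Gy zero_by_dims[OF _ Gz] by auto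
      thus ?thesis using yz Fy by (intro bexI[of _ y]) auto
    next
      case False
      hence le: "leq m n y z" using yz by blast
      have Fz: "F z \<in> carrier_mat 1 0" using homD(1)[OF F, of z] yz by auto
      have "F z * rmap ?T y z = rmap ?X y z * F y" using homD(2)[OF F, of y z] le yz by auto
      moreover have "rmap ?T y z \<in> carrier_mat 0 1" using rmap_intv_carrier[of C y z] yz by auto
      ultimately have "F y = 0\<^sub>m 1 1" using XI[OF yz(5,3)] Fy zero_by_dims[OF Fz] by auto
      thus ?thesis using yz Gy by (intro bexI[of _ y]) auto
    qed
  qed
  then obtain y where y: "y \<in> S \<inter> C" "G y * F y = 0\<^sub>m 1 1" by blast
  have "G x0 * F x0 = G y * F y" using pair_const[OF X F G cc y(1) x0] .
  thus "(G x0 * F x0) $$ (0,0) = 0" using y(2) by simp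
qed

lemma sum_count:
  assumes "finite U"
  shows "(\<Sum>J\<in>U. length (filter (\<lambda>J'. J' = J) Js)) = length (filter (\<lambda>J'. J' \<in> U) Js)"
proof (induction Js)
  case Nil thus ?case by simp
next
  case (Cons a Js)
  have "(\<Sum>J\<in>U. length (filter (\<lambda>J'. J' = J) (a # Js))) =
        (\<Sum>J\<in>U. (if a = J then 1 else 0) + length (filter (\<lambda>J'. J' = J) Js))"
    by (intro sum.cong) auto
  also have "\<dots> = (\<Sum>J\<in>U. (if a = J then 1 else 0)) + (\<Sum>J\<in>U. length (filter (\<lambda>J'. J' = J) Js))"
    by (rule sum.distrib)
  also have "(\<Sum>J\<in>U. (if a = J then 1 else 0)) = (if a \<in> U then 1 else (0::nat))"
    using assms by (simp add: sum.delta)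
  finally show ?case using Cons.IH by simp
qed




lemma grid_side:
  fixes M :: "'a::field rep"
  assumes M: "is_rep m n (grid m n) M" and Js: "\<forall>J\<in>set Js. is_interval m n J"
    and iso: "iso_rep m n (grid m n) M (dsum (map intv_rep Js))"
    and J: "is_interval m n J"
  shows "mult m n (grid m n) M (intv_rep J) = length (filter (\<lambda>J'. J' = J) Js)"
proof -
  let ?G = "grid m n"
  have Jg: "J \<subseteq> ?G" by (rule interval_grid[OF J])
  obtain x0 where x0: "x0 \<in> J" using J unfolding is_interval_def by blast
  have GJ: "?G \<inter> J = J" using Jg by blast
  have T: "is_rep m n ?G (intv_rep J :: 'a rep)" by (rule is_rep_interval[OF subset_refl J])
  have cc: "cconn m n (?G \<inter> J)" unfolding GJ by (rule interval_cconn[OF J])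
  have x0': "x0 \<in> ?G \<inter> J" using x0 GJ by simp
  have eqv: "\<And>J'. J' \<in> set Js \<Longrightarrow> iso_rep m n ?G (intv_rep J' :: 'a rep) (intv_rep J) \<longleftrightarrow> J' = J"
  proof
    fix J' assume J': "J' \<in> set Js" and i: "iso_rep m n ?G (intv_rep J' :: 'a rep) (intv_rep J)"
    have J'g: "J' \<subseteq> ?G" using interval_grid Js J' by blast
    show "J' = J"
    proof (rule ccontr)
      assume "J' \<noteq> J"
      then obtain x where x: "x \<in> ?G" "(x \<in> J') \<noteq> (x \<in> J)" using J'g Jg by blast
      have "rdim (intv_rep J' :: 'a rep) x = rdim (intv_rep J :: 'a rep) x" by (rule iso_dims[OF i x(1)])
      thus False using x(2) by (simp split: if_splits)
    qed
  next
    fix J' assume "J' = J"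
    thus "iso_rep m n ?G (intv_rep J' :: 'a rep) (intv_rep J)" using iso_refl[OF T] by simp
  qed
  have Ls: "\<forall>L\<in>set (map (intv_rep :: vtx set \<Rightarrow> 'a rep) Js). is_rep m n ?G L \<and> (iso_rep m n ?G L (intv_rep J) \<or> null_rep m n ?G (intv_rep J) x0 L)"
  proof
    fix L assume "L \<in> set (map (intv_rep :: vtx set \<Rightarrow> 'a rep) Js)"
    then obtain J' where J': "J' \<in> set Js" "L = intv_rep J'" by auto
    have J'i: "is_interval m n J'" using Js J' by blast
    have X: "is_rep m n ?G (intv_rep J' :: 'a rep)" by (rule is_rep_interval[OF subset_refl J'i])
    show "is_rep m n ?G L \<and> (iso_rep m n ?G L (intv_rep J) \<or> null_rep m n ?G (intv_rep J) x0 L)"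
    proof (cases "J' = J")
      case True thus ?thesis using J' X eqv by auto
    next
      case False
      have bad: "(\<exists>y\<in>?G \<inter> J. y \<notin> J') \<or> (\<exists>y\<in>?G \<inter> J. \<exists>z\<in>?G. z \<in> J' \<and> z \<notin> J \<and> y \<in> J' \<and> (leq m n z y \<or> leq m n y z))"
      proof (cases "J \<subseteq> J'")
        case True
        obtain y z where yz: "y \<in> J" "z \<in> J'" "z \<notin> J" "arrow m n y z \<or> arrow m n z y"
          using interval_adjacent[OF J'i True _ False[symmetric]] x0 by blast
        have "z \<in> ?G" using yz(2) interval_grid[OF J'i] by blast
        thus ?thesis using yz True GJ arrow_leq by blast
      next
        case False
        thus ?thesis using GJ by blast
      qed
      have "null_rep m n ?G (intv_rep J :: 'a rep) x0 (intv_rep J')"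
        by (rule thin_null[OF subset_refl T X cc x0' bad])
      thus ?thesis using J' X by simp
    qed
  qed
  have "mult m n ?G M (intv_rep J) = length (filter (\<lambda>N. iso_rep m n ?G N (intv_rep J :: 'a rep)) (map intv_rep Js))"
    by (rule mult_char[OF subset_refl T cc x0' M iso Ls])
  also have "\<dots> = length (filter (\<lambda>J'. J' = J) Js)"
    unfolding filter_map length_map by (intro arg_cong[where f=length] filter_cong refl) (simp add: eqv)
  finally show ?thesis .
qed

theorem mainTheorem10:
  fixes M :: "'a::field rep" and m n :: nat and I :: "vtx set" and c :: compression
  assumes "m \<ge> 1" and "n \<ge> 1"
    and "is_rep m n (grid m n) M"
    and "interval_decomposable m n M"
    and "is_interval m n I"
  shows "compressed_mult m n c M I =
           (\<Sum>J\<in>{J. is_interval m n J \<and> I \<subseteq> J}. mult m n (grid m n) M (intv_rep J))"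
proof -
  let ?G = "grid m n"
  let ?S = "ess m n c I"
  have M: "is_rep m n ?G M" and I: "is_interval m n I" using assms by auto
  obtain Js where Js: "\<forall>J\<in>set Js. is_interval m n J" and iso: "iso_rep m n ?G M (dsum (map intv_rep Js))"
    using assms(4) unfolding interval_decomposable_def by blast
  have Ig: "I \<subseteq> ?G" by (rule interval_grid[OF I])
  have SI: "?S \<subseteq> I" by (rule ess_sub)
  have Sg: "?S \<subseteq> ?G" using SI Ig by blast
  have SIeq: "?S \<inter> I = ?S" using SI by blast
  obtain x0 where x0: "x0 \<in> ?S" using ess_nonempty[OF I] by blast
  have x0': "x0 \<in> ?S \<inter> I" using x0 SIeq by simp
  have T: "is_rep m n ?S (intv_rep I :: 'a rep)" by (rule is_rep_interval[OF Sg I])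
  have cc: "cconn m n (?S \<inter> I)" unfolding SIeq by (rule ess_cconn[OF I])
  have MS: "is_rep m n ?S M" by (rule is_rep_mono[OF M Sg])
  have isoS: "iso_rep m n ?S M (dsum (map intv_rep Js))" by (rule iso_mono[OF iso Sg])
  have eqv: "\<And>J. J \<in> set Js \<Longrightarrow> iso_rep m n ?S (intv_rep J :: 'a rep) (intv_rep I) \<longleftrightarrow> I \<subseteq> J"
  proof
    fix J assume J: "J \<in> set Js" and i: "iso_rep m n ?S (intv_rep J :: 'a rep) (intv_rep I)"
    show "I \<subseteq> J"
    proof (rule ccontr)
      assume "\<not> I \<subseteq> J"
      hence "\<not> ?S \<subseteq> J" using ess_sub_imp[OF _ Ig] Js J by blast
      then obtain y where y: "y \<in> ?S" "y \<notin> J" by blast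
      have "rdim (intv_rep J :: 'a rep) y = rdim (intv_rep I :: 'a rep) y" by (rule iso_dims[OF i y(1)])
      thus False using y SI by auto
    qed
  next
    fix J assume J: "J \<in> set Js" and IJ: "I \<subseteq> J"
    have X: "is_rep m n ?S (intv_rep J :: 'a rep)" using is_rep_interval[OF Sg] Js J by blast
    show "iso_rep m n ?S (intv_rep J :: 'a rep) (intv_rep I)"
    proof (rule iso_eq[OF X])
      show "\<forall>x\<in>?S. rdim (intv_rep J :: 'a rep) x = rdim (intv_rep I :: 'a rep) x" using SI IJ by auto
      show "\<forall>x\<in>?S. \<forall>y\<in>?S. leq m n x y \<longrightarrow> rmap (intv_rep J :: 'a rep) x y = rmap (intv_rep I) x y"
      proof (intro ballI impI)
        fix x y assume "x \<in> ?S" "y \<in> ?S"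
        hence "x \<in> I" "y \<in> I" "x \<in> J" "y \<in> J" using SI IJ by auto
        thus "rmap (intv_rep J :: 'a rep) x y = rmap (intv_rep I) x y" by (simp add: rmap_intv_in)
      qed
    qed
  qed
  have Ls: "\<forall>L\<in>set (map (intv_rep :: vtx set \<Rightarrow> 'a rep) Js). is_rep m n ?S L \<and> (iso_rep m n ?S L (intv_rep I) \<or> null_rep m n ?S (intv_rep I) x0 L)"
  proof
    fix L assume "L \<in> set (map (intv_rep :: vtx set \<Rightarrow> 'a rep) Js)"
    then obtain J where J: "J \<in> set Js" "L = intv_rep J" by auto
    have Ji: "is_interval m n J" using Js J by blast
    have X: "is_rep m n ?S (intv_rep J :: 'a rep)" by (rule is_rep_interval[OF Sg Ji])
    show "is_rep m n ?S L \<and> (iso_rep m n ?S L (intv_rep I) \<or> null_rep m n ?S (intv_rep I) x0 L)"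
    proof (cases "I \<subseteq> J")
      case True thus ?thesis using J X eqv by auto
    next
      case False
      hence "\<not> ?S \<subseteq> J" using ess_sub_imp[OF Ji Ig] by blast
      then obtain y where y: "y \<in> ?S" "y \<notin> J" by blast
      have bad: "(\<exists>y\<in>?S \<inter> I. y \<notin> J) \<or> (\<exists>y\<in>?S \<inter> I. \<exists>z\<in>?S. z \<in> J \<and> z \<notin> I \<and> y \<in> J \<and> (leq m n z y \<or> leq m n y z))"
        using y SIeq by blast
      have "null_rep m n ?S (intv_rep I :: 'a rep) x0 (intv_rep J)"
        by (rule thin_null[OF Sg T X cc x0' bad])
      thus ?thesis using J X by simp
    qed
  qed
  have "compressed_mult m n c M I = mult m n ?S M (intv_rep I)" unfolding compressed_mult_def ..
  also have "\<dots> = length (filter (\<lambda>N. iso_rep m n ?S N (intv_rep I :: 'a rep)) (map intv_rep Js))"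
    by (rule mult_char[OF Sg T cc x0' MS isoS Ls])
  also have "\<dots> = length (filter (\<lambda>J. I \<subseteq> J) Js)"
    unfolding filter_map length_map by (intro arg_cong[where f=length] filter_cong refl) (simp add: eqv)
  finally have lhs: "compressed_mult m n c M I = length (filter (\<lambda>J. I \<subseteq> J) Js)" .
  let ?U = "{J. is_interval m n J \<and> I \<subseteq> J}"
  have finU: "finite ?U"
  proof (rule finite_subset[of _ "Pow ?G"])
    show "?U \<subseteq> Pow ?G" using interval_grid by blast
    show "finite (Pow ?G)" using finite_grid by simp
  qed
  have "(\<Sum>J\<in>?U. mult m n ?G M (intv_rep J)) = (\<Sum>J\<in>?U. length (filter (\<lambda>J'. J' = J) Js))"
    using grid_side[OF M Js iso] by (intro sum.cong) auto
  also have "\<dots> = length (filter (\<lambda>J'. J' \<in> ?U) Js)" by (rule sum_count[OF finU])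
  also have "\<dots> = length (filter (\<lambda>J. I \<subseteq> J) Js)"
    by (intro arg_cong[where f=length] filter_cong refl) (use Js in auto)
  finally show ?thesis using lhs by simp
qed



end
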